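(* Let $k\ge1$ and consider the online ranking game with top-1 feedback where an oblivious adversary chooses $r_1,\dots,r_T\in\{0,1\}^m$. Let the learner run algorithm RTop-1F (described in the context) with $K=m^{-1/3}T^{2/3}$ and $\epsilon=\sqrt{1/(mK)}$. Then $$\mathbb{E}\Big[\sum_{t=1}^T Prec@k(\sigma_t,r_t)\Big]\ge\max_\sigma\sum_{t=1}^T Prec@k(\sigma,r_t)-O(km^{2/3}T^{2/3}),$$ the expectation being over the learner's random actions.
   Context: Objects are $\{1,\dots,m\}$; a ranking is a permutation $\sigma$ of $[m]$ with $\sigma(i)$ the rank of object $i$ and $\sigma^{-1}(j)$ the object at rank $j$. $Prec@k(\sigma,r)=\sum_{i=1}^m\mathbb{1}(\sigma(i)\le k)\,r(i)$ (a gain). Game: the oblivious adversary fixes $r_1,\dots,r_T$ in advance; at round $t$ the learner outputs $\sigma_t$ and observes only $r_t(\sigma_t^{-1}(1))$. Algorithm RTop-1F with parameters $K,\epsilon$: split $\{1,\dots,T\}$ into $K$ consecutive blocks $B_i=\{(i-1)T/K+1,\dots,iT/K\}$. Initialize $\hat s_0=\hat r_0=0\in\mathbb{R}^m$. For $i=1,\dots,K$: set $\hat s_i=\hat s_{i-1}+\hat r_{i-1}$; choose $m$ distinct time points $i_1,\dots,i_m$ from $B_i$ uniformly at random without replacement; for each $t\in B_i$: if $t=i_j$, output any permutation placing object $j$ at rank 1 and receive $r_{i_j}(j)$; otherwise sample $p_t$ uniformly from $[0,1/\epsilon]^m$ and output $\sigma_t=\arg\min_\sigma\sigma\cdot(\hat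 s_i+p_t)$ (here $\sigma$ is identified with $(\sigma(1),\dots,\sigma(m))$). At the end of the block set $\hat r_i=(r_{i_1}(1),\dots,r_{i_m}(m))$. *)

theory Defs
  imports "HOL-Probability.Probability" "HOL-Combinatorics.Permutations"
begin

text \<open>Objects and ranks are 1..m; a ranking sigma is a permutation of {1..m}
  (sigma i = rank of object i). Reward vectors r t :: nat => real, used on {1..m}.\<close>

definition prec_at :: "nat \<Rightarrow> nat \<Rightarrow> (nat \<Rightarrow> nat) \<Rightarrow> (nat \<Rightarrow> real) \<Rightarrow> real" where
  "prec_at m k \<sigma> r = (\<Sum>i\<in>{1..m}. if \<sigma> i \<le> k then r i else 0)"

definition block :: "nat \<Rightarrow> nat \<Rightarrow> nat \<Rightarrow> nat set" where
  "block T K i = {(i - 1) * (T div K) + 1 .. i * (T div K)}"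

definition block_of :: "nat \<Rightarrow> nat \<Rightarrow> nat \<Rightarrow> nat" where
  "block_of T K t = (t - 1) div (T div K) + 1"

text \<open>Choices of m distinct time points i_1..i_m in block i (object j explored at time f j).\<close>
definition probe_choices :: "nat \<Rightarrow> nat \<Rightarrow> nat \<Rightarrow> nat \<Rightarrow> (nat \<Rightarrow> nat) set" where
  "probe_choices m T K i = {f \<in> {1..m} \<rightarrow>\<^sub>E block T K i. inj_on f {1..m}}"

definition rtop1f_space :: "nat \<Rightarrow> nat \<Rightarrow> nat \<Rightarrow> real \<Rightarrow>
    ((nat \<Rightarrow> nat \<Rightarrow> nat) \<times> (nat \<Rightarrow> nat \<Rightarrow> real)) measure" where
  "rtop1f_space m T K \<epsilon> =
     (PiM {1..K} (\<lambda>i. measure_pmf (pmf_of_set (probe_choices m T K i))))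
     \<Otimes>\<^sub>M (PiM {1..T} (\<lambda>t. PiM {1..m} (\<lambda>j. uniform_measure lborel {0..1/\<epsilon>})))"

definition s_hat :: "(nat \<Rightarrow> nat \<Rightarrow> real) \<Rightarrow> (nat \<Rightarrow> nat \<Rightarrow> nat) \<Rightarrow> nat \<Rightarrow> nat \<Rightarrow> real" where
  "s_hat r I i j = (\<Sum>i'\<in>{1..<i}. r (I i' j) j)"

text \<open>The ranking output by RTop-1F at round t given the randomness (I, P).
  top1 t j is the (arbitrary) permutation output at an exploration round placing j at rank 1.\<close>
definition rtop1f_action :: "nat \<Rightarrow> nat \<Rightarrow> nat \<Rightarrow> (nat \<Rightarrow> nat \<Rightarrow> nat \<Rightarrow> nat) \<Rightarrow>
    (nat \<Rightarrow> nat \<Rightarrow> real) \<Rightarrow> (nat \<Rightarrow> nat \<Rightarrow> nat) \<times> (nat \<Rightarrow> nat \<Rightarrow> real) \<Rightarrow> nat \<Rightarrow> (nat \<Rightarrow> nat)" where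
  "rtop1f_action m T K top1 r \<omega> t =
     (let I = fst \<omega>; P = snd \<omega>; i = block_of T K t in
      if \<exists>j\<in>{1..m}. I i j = t then top1 t (THE j. j \<in> {1..m} \<and> I i j = t)
      else arg_min_on (\<lambda>\<sigma>. \<Sum>j\<in>{1..m}. real (\<sigma> j) * (s_hat r I i j + P t j))
             {\<sigma>. \<sigma> permutes {1..m}})"

end

theory Submission
  imports Defs
begin


definition perms :: "nat \<Rightarrow> (nat \<Rightarrow> nat) set" where
  "perms m = {\<sigma>. \<sigma> permutes {1..m}}"
definition objv :: "nat \<Rightarrow> (nat \<Rightarrow> real) \<Rightarrow> (nat \<Rightarrow> nat) \<Rightarrow> real" where
  "objv m c \<sigma> = (\<Sum>j\<in>{1..m}. real (\<sigma> j) * c j)"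
definition amin :: "nat \<Rightarrow> (nat \<Rightarrow> real) \<Rightarrow> (nat \<Rightarrow> nat)" where
  "amin m c = arg_min_on (objv m c) (perms m)"
definition topv :: "nat \<Rightarrow> (nat \<Rightarrow> nat) \<Rightarrow> nat \<Rightarrow> real" where
  "topv k \<sigma> = (\<lambda>j. if \<sigma> j \<le> k then 1 else 0)"
definition dotp :: "nat \<Rightarrow> (nat \<Rightarrow> real) \<Rightarrow> (nat \<Rightarrow> real) \<Rightarrow> real" where
  "dotp m x y = (\<Sum>j\<in>{1..m}. x j * y j)"

lemma prec_at_dotp: "prec_at m k \<sigma> r = dotp m (topv k \<sigma>) r"
  unfolding prec_at_def dotp_def topv_def by (intro sum.cong) auto

lemma finite_perms: "finite (perms m)"
  unfolding perms_def by (simp add: finite_permutations)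

lemma perms_ne: "perms m \<noteq> {}"
  unfolding perms_def using permutes_id by blast

lemma amin_in: "amin m c \<in> perms m"
  unfolding amin_def using arg_min_if_finite(1)[OF finite_perms perms_ne] by blast

lemma amin_min: "\<tau> \<in> perms m \<Longrightarrow> objv m c (amin m c) \<le> objv m c \<tau>"
proof -
  assume t: "\<tau> \<in> perms m"
  have "\<not> (\<exists>x\<in>perms m. objv m c x < objv m c (arg_min_on (objv m c) (perms m)))"
    by (rule arg_min_if_finite(2)[OF finite_perms perms_ne])
  then show ?thesis unfolding amin_def using t by (simp add: not_less)
qed

lemma swap_lemma:
  assumes \<sigma>: "\<sigma> \<in> perms m" and min: "\<And>\<tau>. \<tau> \<in> perms m \<Longrightarrow> objv m c \<sigma> \<le> objv m c \<tau>"
    and a: "a \<in> {1..m}" and b: "b \<in> {1..m}" and cab: "c a > c b"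
  shows "\<sigma> a < \<sigma> b"
proof (rule ccontr)
  assume "\<not> \<sigma> a < \<sigma> b"
  moreover have ab: "a \<noteq> b" using cab by auto
  moreover have sp: "\<sigma> permutes {1..m}" using \<sigma> unfolding perms_def by simp
  moreover have "\<sigma> a \<noteq> \<sigma> b" using permutes_inj[OF sp] ab by (simp add: inj_eq)
  ultimately have lt: "\<sigma> b < \<sigma> a" by simp
  define \<tau> where "\<tau> = \<sigma> \<circ> Transposition.transpose a b"
  have tp: "\<tau> \<in> perms m" unfolding \<tau>_def perms_def
    using permutes_compose[OF permutes_swap_id[OF a b] sp] by simp
  define d where "d = (\<lambda>j. (real (\<tau> j) - real (\<sigma> j)) * c j)"
  have "objv m c \<tau> - objv m c \<sigma> = (\<Sum>j\<in>{1..m}. d j)"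
    unfolding objv_def d_def by (simp only: sum_subtractf[symmetric] left_diff_distrib)
  also have "\<dots> = (\<Sum>j\<in>{a,b}. d j)"
  proof (rule sum.mono_neutral_right)
    show "{a, b} \<subseteq> {1..m}" using a b by simp
    show "\<forall>i\<in>{1..m} - {a, b}. d i = 0"
      by (simp add: d_def \<tau>_def transpose_apply_other)
  qed simp
  also have "\<dots> = d a + d b" using ab by simp
  also have "d a = (real (\<sigma> b) - real (\<sigma> a)) * c a" by (simp add: d_def \<tau>_def)
  also have "d b = (real (\<sigma> a) - real (\<sigma> b)) * c b" by (simp add: d_def \<tau>_def)
  also have "(real (\<sigma> b) - real (\<sigma> a)) * c a + (real (\<sigma> a) - real (\<sigma> b)) * c b
      = (real (\<sigma> b) - real (\<sigma> a)) * (c a - c b)" by (simp add: right_diff_distrib left_diff_distrib)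
  also have "\<dots> < 0" using lt cab by (simp add: mult_neg_pos)
  finally show False using min[OF tp] by simp
qed

lemma card_topset:
  assumes "\<sigma> \<in> perms m"
  shows "card {j\<in>{1..m}. \<sigma> j \<le> k} = card {y\<in>{1..m}. y \<le> k}"
proof -
  have p: "\<sigma> permutes {1..m}" using assms unfolding perms_def by auto
  have inj: "inj_on \<sigma> {j\<in>{1..m}. \<sigma> j \<le> k}"
    using permutes_inj[OF p] by (auto intro: inj_on_subset)
  have "\<sigma> ` {j\<in>{1..m}. \<sigma> j \<le> k} = {y\<in>{1..m}. y \<le> k}"
  proof
    show "\<sigma> ` {j\<in>{1..m}. \<sigma> j \<le> k} \<subseteq> {y\<in>{1..m}. y \<le> k}"
      using permutes_in_image[OF p] by auto
    show "{y\<in>{1..m}. y \<le> k} \<subseteq> \<sigma> ` {j\<in>{1..m}. \<sigma> j \<le> k}"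
    proof
      fix y assume y: "y \<in> {y\<in>{1..m}. y \<le> k}"
      then have "y \<in> \<sigma> ` {1..m}" using permutes_image[OF p] by auto
      then obtain x where "x \<in> {1..m}" "y = \<sigma> x" by auto
      then show "y \<in> \<sigma> ` {j\<in>{1..m}. \<sigma> j \<le> k}" using y by auto
    qed
  qed
  then show ?thesis using card_image[OF inj] by simp
qed

lemma dotp_topv: "dotp m (topv k \<sigma>) c = (\<Sum>j\<in>{j\<in>{1..m}. \<sigma> j \<le> k}. c j)"
  unfolding dotp_def topv_def by (subst sum.inter_filter) (auto intro!: sum.cong)

lemma rearrangement:
  assumes \<sigma>: "\<sigma> \<in> perms m" and min: "\<And>\<tau>. \<tau> \<in> perms m \<Longrightarrow> objv m c \<sigma> \<le> objv m c \<tau>"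
    and \<tau>: "\<tau> \<in> perms m"
  shows "dotp m (topv k \<tau>) c \<le> dotp m (topv k \<sigma>) c"
proof -
  define S where "S = {j\<in>{1..m}. \<sigma> j \<le> k}"
  define U where "U = {j\<in>{1..m}. \<tau> j \<le> k}"
  have fS: "finite S" and fU: "finite U" unfolding S_def U_def by auto
  have cSU: "card S = card U" unfolding S_def U_def
    using card_topset[OF \<sigma>] card_topset[OF \<tau>] by simp
  have dom: "c b \<le> c a" if "a \<in> S - U" "b \<in> U - S" for a b
  proof (rule ccontr)
    assume "\<not> c b \<le> c a"
    then have "\<sigma> b < \<sigma> a" using swap_lemma[OF \<sigma> min, of b a] that unfolding S_def U_def by auto
    then show False using that unfolding S_def U_def by auto
  qed
  have "card (S - U) = card (U - S)"
    using cSU fS fU by (simp add: card_Diff_subset_Int Int_commute)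
  then obtain h where h: "bij_betw h (U - S) (S - U)"
    using finite_same_card_bij[of "U - S" "S - U"] fS fU by auto
  have "(\<Sum>j\<in>U - S. c j) \<le> (\<Sum>j\<in>U - S. c (h j))"
    by (rule sum_mono) (use dom h in \<open>auto simp: bij_betw_def\<close>)
  also have "\<dots> = (\<Sum>j\<in>S - U. c j)" by (rule sum.reindex_bij_betw[OF h])
  finally have le: "(\<Sum>j\<in>U - S. c j) \<le> (\<Sum>j\<in>S - U. c j)" .
  have "(\<Sum>j\<in>U. c j) = (\<Sum>j\<in>U \<inter> S. c j) + (\<Sum>j\<in>U - S. c j)" by (rule sum.Int_Diff[OF fU])
  moreover have "(\<Sum>j\<in>S. c j) = (\<Sum>j\<in>S \<inter> U. c j) + (\<Sum>j\<in>S - U. c j)" by (rule sum.Int_Diff[OF fS])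
  ultimately have "(\<Sum>j\<in>U. c j) \<le> (\<Sum>j\<in>S. c j)" using le by (simp add: Int_commute)
  then show ?thesis unfolding dotp_topv S_def U_def .
qed

definition gv :: "nat \<Rightarrow> nat \<Rightarrow> (nat \<Rightarrow> real) \<Rightarrow> nat \<Rightarrow> real" where
  "gv m k c = topv k (amin m c)"

lemma gv_opt:
  assumes t: "\<tau> \<in> perms m"
  shows "dotp m (topv k \<tau>) c \<le> dotp m (gv m k c) c"
proof -
  have mn: "\<And>\<tau>'. \<tau>' \<in> perms m \<Longrightarrow> objv m c (amin m c) \<le> objv m c \<tau>'" by (rule amin_min)
  show ?thesis unfolding gv_def by (rule rearrangement[OF amin_in mn t])
qed

lemma card_top_le: "\<sigma> \<in> perms m \<Longrightarrow> card {j\<in>{1..m}. \<sigma> j \<le> k} \<le> k"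
proof -
  assume s: "\<sigma> \<in> perms m"
  have "card {y\<in>{1..m}. y \<le> k} \<le> card {1..k}" by (rule card_mono) auto
  then show ?thesis using card_topset[OF s, of k] by simp
qed

lemma dotp_topv_bound:
  assumes "\<sigma> \<in> perms m" "\<And>j. j \<in> {1..m} \<Longrightarrow> 0 \<le> u j \<and> u j \<le> B" "0 \<le> B"
  shows "0 \<le> dotp m (topv k \<sigma>) u" "dotp m (topv k \<sigma>) u \<le> real k * B"
proof -
  show "0 \<le> dotp m (topv k \<sigma>) u" unfolding dotp_topv using assms(2) by (auto intro: sum_nonneg)
  have "dotp m (topv k \<sigma>) u \<le> (\<Sum>j\<in>{j\<in>{1..m}. \<sigma> j \<le> k}. B)" unfolding dotp_topv
    by (rule sum_mono) (use assms(2) in auto)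
  also have "\<dots> = real (card {j\<in>{1..m}. \<sigma> j \<le> k}) * B" by simp
  also have "\<dots> \<le> real k * B"
    by (rule mult_right_mono) (use card_top_le[OF assms(1), of k] assms(3) in auto)
  finally show "dotp m (topv k \<sigma>) u \<le> real k * B" .
qed





lemma dotp_add: "dotp m g (\<lambda>j. u j + v j) = dotp m g u + dotp m g v"
  unfolding dotp_def by (simp add: distrib_left sum.distrib)

lemma btl:
  assumes step: "\<And>n j. x (Suc n) j = x n j + y (Suc n) j"
  shows "dotp m (gv m k (x n)) (x n) - dotp m (gv m k (x 0)) (x 0)
           \<le> (\<Sum>i\<in>{1..n}. dotp m (gv m k (x i)) (y i))"
proof (induction n)
  case 0
  then show ?case by simp
next
  case (Suc n)
  have xe: "x (Suc n) = (\<lambda>j. x n j + y (Suc n) j)" using step by auto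
  have "dotp m (gv m k (x (Suc n))) (x (Suc n))
        = dotp m (gv m k (x (Suc n))) (x n) + dotp m (gv m k (x (Suc n))) (y (Suc n))"
    by (subst (2) xe) (rule dotp_add)
  also have "dotp m (gv m k (x (Suc n))) (x n) \<le> dotp m (gv m k (x n)) (x n)"
    unfolding gv_def[of m k "x (Suc n)"] by (rule gv_opt[OF amin_in])
  finally have "dotp m (gv m k (x (Suc n))) (x (Suc n))
        \<le> dotp m (gv m k (x n)) (x n) + dotp m (gv m k (x (Suc n))) (y (Suc n))" by simp
  moreover have "(\<Sum>i\<in>{1..Suc n}. dotp m (gv m k (x i)) (y i))
      = (\<Sum>i\<in>{1..n}. dotp m (gv m k (x i)) (y i)) + dotp m (gv m k (x (Suc n))) (y (Suc n))"
    by simp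
  ultimately show ?case using Suc.IH by linarith
qed




lemma sum_PiE_coord:
  fixes F :: "('a \<Rightarrow> 'b) \<Rightarrow> real" and g :: "'b \<Rightarrow> real"
  assumes fin: "finite A" "\<And>i. i \<in> A \<Longrightarrow> finite (P i)" and i: "i \<in> A"
    and inv: "\<And>x y. x \<in> Pi\<^sub>E A P \<Longrightarrow> y \<in> P i \<Longrightarrow> F (x(i := y)) = F x"
  shows "(\<Sum>x\<in>Pi\<^sub>E A P. F x * g (x i)) * real (card (P i))
          = (\<Sum>x\<in>Pi\<^sub>E A P. F x) * (\<Sum>y\<in>P i. g y)"
proof -
  define S where "S = Pi\<^sub>E A P"
  define \<phi> where "\<phi> = (\<lambda>(x::'a\<Rightarrow>'b, y::'b). (x(i := y), x i))"
  have mem: "\<phi> z \<in> S \<times> P i" if "z \<in> S \<times> P i" for z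
    using that i unfolding \<phi>_def S_def by (auto simp: fun_upd_in_PiE PiE_iff)
  have inv2: "\<phi> (\<phi> z) = z" for z
    unfolding \<phi>_def by (auto simp: case_prod_beta)
  have "(\<Sum>x\<in>S. F x * g (x i)) * real (card (P i)) = (\<Sum>x\<in>S. \<Sum>y\<in>P i. F x * g (x i))"
    by (simp add: sum_distrib_left sum_distrib_right mult_ac)
  also have "\<dots> = (\<Sum>z\<in>S \<times> P i. F (fst z) * g (fst z i))"
    by (subst sum.cartesian_product) (simp only: split_def)
  also have "\<dots> = (\<Sum>z\<in>S \<times> P i. F (fst z) * g (snd z))"
  proof (rule sum.reindex_bij_witness[where i=\<phi> and j=\<phi>])
    fix z assume z: "z \<in> S \<times> P i"
    show "\<phi> (\<phi> z) = z" by (rule inv2)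
    show "\<phi> z \<in> S \<times> P i" by (rule mem[OF z])
    show "\<phi> (\<phi> z) = z" by (rule inv2)
    show "\<phi> z \<in> S \<times> P i" by (rule mem[OF z])
    show "F (fst (\<phi> z)) * g (snd (\<phi> z)) = F (fst z) * g (fst z i)"
      using z inv[of "fst z" "snd z"] unfolding \<phi>_def S_def by (auto simp: case_prod_beta)
  qed
  also have "\<dots> = (\<Sum>x\<in>S. \<Sum>y\<in>P i. F x * g y)"
    by (subst sum.cartesian_product) (simp only: split_def)
  also have "\<dots> = (\<Sum>x\<in>S. F x) * (\<Sum>y\<in>P i. g y)"
    by (rule sum_product[symmetric])
  finally show ?thesis unfolding S_def .
qed




lemma transpose_in: "a \<in> B \<Longrightarrow> b \<in> B \<Longrightarrow> c \<in> B \<Longrightarrow> Transposition.transpose a b c \<in> B"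
  by (cases "c = a"; cases "c = b") (simp_all add: transpose_apply_first transpose_apply_second transpose_apply_other)

lemma probe_sum:
  fixes g :: "nat \<Rightarrow> real" and m j :: nat
  assumes B: "finite B" and j: "j \<in> {1..m}"
  defines "Pr \<equiv> {f \<in> {1..m} \<rightarrow>\<^sub>E B. inj_on f {1..m}}"
  shows "real (card B) * (\<Sum>f\<in>Pr. g (f j)) = real (card Pr) * (\<Sum>t\<in>B. g t)"
proof -
  define tr where "tr = (\<lambda>(f::nat\<Rightarrow>nat) (t::nat). restrict (Transposition.transpose (f j) t \<circ> f) {1..m})"
  define \<psi> :: "(nat\<Rightarrow>nat) \<times> nat \<Rightarrow> (nat\<Rightarrow>nat) \<times> nat" where "\<psi> = (\<lambda>z. (tr (fst z) (snd z), fst z j))"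
  have trj: "tr f t j = t" for f t using j unfolding tr_def by simp
  have fPr: "finite Pr" unfolding Pr_def
    by (rule finite_subset[of _ "{1..m} \<rightarrow>\<^sub>E B"]) (use B in \<open>auto intro: finite_PiE\<close>)
  have mem: "\<psi> z \<in> Pr \<times> B" if z: "z \<in> Pr \<times> B" for z
  proof -
    obtain f t where zf: "z = (f, t)" by (cases z)
    have zz: "(f, t) \<in> Pr \<times> B" using z zf by simp
    have f: "f \<in> {1..m} \<rightarrow>\<^sub>E B" "inj_on f {1..m}" and t: "t \<in> B"
      using zz unfolding Pr_def mem_Sigma_iff mem_Collect_eq by blast+
    have fj: "f j \<in> B" using f(1) j by (simp add: PiE_iff)
    have fx: "f x \<in> B" if "x \<in> {1..m}" for x using f(1) that by (simp add: PiE_iff)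
    have "tr f t \<in> {1..m} \<rightarrow>\<^sub>E B"
      unfolding tr_def restrict_PiE_iff o_def by (intro ballI transpose_in[OF fj t fx])
    moreover have "inj_on (tr f t) {1..m}"
    proof -
      have "inj_on (Transposition.transpose (f j) t \<circ> f) {1..m}"
        by (rule comp_inj_on[OF f(2)]) simp
      moreover have "inj_on (tr f t) {1..m} = inj_on (Transposition.transpose (f j) t \<circ> f) {1..m}"
        unfolding tr_def by (rule inj_on_cong) simp
      ultimately show ?thesis by simp
    qed
    ultimately show ?thesis using zf fj unfolding \<psi>_def Pr_def by simp
  qed
  have inv2: "\<psi> (\<psi> z) = z" if z: "z \<in> Pr \<times> B" for z
  proof -
    obtain f t where zf: "z = (f, t)" by (cases z)
    have zz: "(f, t) \<in> Pr \<times> B" using z zf by simp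
    have f: "f \<in> {1..m} \<rightarrow>\<^sub>E B" using zz unfolding Pr_def mem_Sigma_iff mem_Collect_eq by blast
    have "tr (tr f t) (f j) = f"
    proof
      fix x show "tr (tr f t) (f j) x = f x"
      proof (cases "x \<in> {1..m}")
        case True
        then show ?thesis unfolding tr_def using j
          by (simp add: transpose_commute[of t "f j"] transpose_involutory)
      next
        case False
        have "tr (tr f t) (f j) x = undefined" unfolding tr_def using False by (simp only: restrict_apply if_False)
        moreover have "f x = undefined" using f False by (simp add: PiE_def extensional_def)
        ultimately show ?thesis by simp
      qed
    qed
    then show ?thesis using zf unfolding \<psi>_def by (simp add: trj)
  qed
  have "real (card B) * (\<Sum>f\<in>Pr. g (f j)) = (\<Sum>f\<in>Pr. \<Sum>t\<in>B. g (f j))"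
    by (simp add: sum_distrib_left mult_ac)
  also have "\<dots> = (\<Sum>z\<in>Pr \<times> B. g (fst z j))"
    by (subst sum.cartesian_product) (simp only: split_def)
  also have "\<dots> = (\<Sum>z\<in>Pr \<times> B. g (snd z))"
  proof (rule sum.reindex_bij_witness[where i=\<psi> and j=\<psi>])
    fix z assume z: "z \<in> Pr \<times> B"
    show "\<psi> (\<psi> z) = z" by (rule inv2[OF z])
    show "\<psi> z \<in> Pr \<times> B" by (rule mem[OF z])
    show "\<psi> (\<psi> z) = z" by (rule inv2[OF z])
    show "\<psi> z \<in> Pr \<times> B" by (rule mem[OF z])
    show "g (snd (\<psi> z)) = g (fst z j)"
      unfolding \<psi>_def by (simp add: trj)
  qed
  also have "\<dots> = (\<Sum>f\<in>Pr. \<Sum>t\<in>B. g t)"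
    by (subst sum.cartesian_product) (simp only: split_def)
  also have "\<dots> = real (card Pr) * (\<Sum>t\<in>B. g t)" by simp
  finally show ?thesis .
qed



lemma block_card: "i \<ge> 1 \<Longrightarrow> card (block T K i) = T div K"
  unfolding block_def by (cases i) auto

lemma block_of_block:
  assumes "t \<in> block T K i" "i \<ge> 1" "T div K \<ge> 1"
  shows "block_of T K t = i"
proof -
  define L where "L = T div K"
  have t: "(i - 1) * L + 1 \<le> t" "t \<le> i * L" using assms(1) unfolding block_def L_def by auto
  have "(t - 1) div L = i - 1"
  proof (rule div_nat_eqI)
    show "L * (i - 1) \<le> t - 1" using t by (simp add: mult.commute)
    have "t - 1 < i * L" using t assms(3) unfolding L_def by linarith
    then show "t - 1 < L * Suc (i - 1)" using assms(2) by (simp add: mult.commute)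
  qed
  then show ?thesis unfolding block_of_def L_def using assms(2) by simp
qed

lemma blocks_partition:
  assumes "K \<ge> 1" "K dvd T" "T div K \<ge> 1"
  shows "{1..T} = (\<Union>i\<in>{1..K}. block T K i)"
proof
  define L where "L = T div K"
  have TKL: "T = K * L" using assms(2) unfolding L_def by simp
  show "(\<Union>i\<in>{1..K}. block T K i) \<subseteq> {1..T}"
  proof
    fix t assume "t \<in> (\<Union>i\<in>{1..K}. block T K i)"
    then obtain i where i: "i \<in> {1..K}" "t \<in> block T K i" by auto
    have iK: "i * L \<le> K * L" using i(1) by simp
    have t1: "1 \<le> t" and t2: "t \<le> i * L" using i(2) unfolding block_def L_def[symmetric] by auto
    show "t \<in> {1..T}" using t1 le_trans[OF t2 iK] TKL by simp
  qed
  show "{1..T} \<subseteq> (\<Union>i\<in>{1..K}. block T K i)"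
  proof
    fix t assume t: "t \<in> {1..T}"
    define q where "q = (t - 1) div L"
    have L1: "L \<ge> 1" using assms(3) unfolding L_def .
    have q1: "q * L \<le> t - 1" unfolding q_def by (simp add: div_times_less_eq_dividend)
    have q2: "t - 1 < (q + 1) * L" unfolding q_def using L1
      by (metis add.commute div_mult_mod_eq mod_less_divisor add_less_cancel_left distrib_right mult_1 not_one_le_zero  le_less_trans less_le_trans zero_less_iff_neq_zero) 
    have "q < K"
    proof -
      have "q * L < K * L" using q1 t TKL L1 by (metis atLeastAtMost_iff diff_less le_less_trans zero_less_one less_le_trans)
      then show ?thesis by simp
    qed
    then have "q + 1 \<in> {1..K}" by simp
    moreover have "t \<in> block T K (q + 1)" unfolding block_def L_def[symmetric]
      using q1 q2 t by auto
    ultimately show "t \<in> (\<Union>i\<in>{1..K}. block T K i)" by blast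
  qed
qed

lemma blocks_disjoint:
  assumes "T div K \<ge> 1" "i \<ge> 1" "i' \<ge> 1" "i \<noteq> i'"
  shows "block T K i \<inter> block T K i' = {}"
  using block_of_block[of _ T K i] block_of_block[of _ T K i'] assms by auto




definition minset :: "nat \<Rightarrow> (nat \<Rightarrow> real) \<Rightarrow> (nat \<Rightarrow> nat) set" where
  "minset m c = {\<sigma>\<in>perms m. \<forall>\<tau>\<in>perms m. objv m c \<sigma> \<le> objv m c \<tau>}"

lemma amin_Eps: "amin m c = (SOME \<sigma>. \<sigma> \<in> minset m c)"
proof -
  have "(\<lambda>x. is_arg_min (objv m c) (\<lambda>x. x \<in> perms m) x) = (\<lambda>x. x \<in> minset m c)"
    by (rule ext) (auto simp: is_arg_min_def minset_def not_less)
  then show ?thesis unfolding amin_def arg_min_on_def arg_min_def by simp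
qed

lemma meas_minset:
  assumes c: "\<And>j. c j \<in> borel_measurable N"
  shows "(\<lambda>\<omega>. minset m (\<lambda>j. c j \<omega>)) \<in> N \<rightarrow>\<^sub>M count_space (Pow (perms m))"
proof (subst measurable_count_space_eq2)
  show "finite (Pow (perms m))" using finite_perms by simp
  show "(\<lambda>\<omega>. minset m (\<lambda>j. c j \<omega>)) \<in> space N \<rightarrow> Pow (perms m) \<and>
    (\<forall>a\<in>Pow (perms m). (\<lambda>\<omega>. minset m (\<lambda>j. c j \<omega>)) -` {a} \<inter> space N \<in> sets N)"
  proof safe
    fix \<omega> \<sigma> assume "\<sigma> \<in> minset m (\<lambda>j. c j \<omega>)"
    then show "\<sigma> \<in> perms m" unfolding minset_def by simp
  next
    fix a assume a: "a \<subseteq> perms m"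
    have eq: "(\<lambda>\<omega>. minset m (\<lambda>j. c j \<omega>)) -` {a} \<inter> space N
      = {\<omega>\<in>space N. \<forall>\<sigma>\<in>perms m. (\<sigma> \<in> a) = (\<forall>\<tau>\<in>perms m.
           (\<Sum>j\<in>{1..m}. real (\<sigma> j) * c j \<omega>) \<le> (\<Sum>j\<in>{1..m}. real (\<tau> j) * c j \<omega>))}"
      using a unfolding minset_def objv_def by auto
    have [measurable]: "\<And>j. c j \<in> borel_measurable N" by (rule c)
    have fp: "finite (perms m)" by (rule finite_perms)
    show "(\<lambda>\<omega>. minset m (\<lambda>j. c j \<omega>)) -` {a} \<inter> space N \<in> sets N"
      unfolding eq using fp by measurable
  qed
qed

lemma meas_amin:
  assumes c: "\<And>j. c j \<in> borel_measurable N"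
  shows "(\<lambda>\<omega>. F (amin m (\<lambda>j. c j \<omega>))) \<in> N \<rightarrow>\<^sub>M count_space UNIV"
proof -
  have "(\<lambda>\<omega>. (\<lambda>S. F (SOME \<sigma>. \<sigma> \<in> S)) (minset m (\<lambda>j. c j \<omega>))) \<in> N \<rightarrow>\<^sub>M count_space UNIV"
    by (rule measurable_compose[OF meas_minset[OF c]]) simp
  then show ?thesis by (simp add: amin_Eps)
qed

lemma meas_amin_real:
  fixes F :: "(nat \<Rightarrow> nat) \<Rightarrow> real"
  assumes c: "\<And>j. c j \<in> borel_measurable N"
  shows "(\<lambda>\<omega>. F (amin m (\<lambda>j. c j \<omega>))) \<in> borel_measurable N"
proof -
  have "(\<lambda>\<omega>. (\<lambda>S. F (SOME \<sigma>. \<sigma> \<in> S)) (minset m (\<lambda>j. c j \<omega>))) \<in> borel_measurable N"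
    by (rule measurable_compose[OF meas_minset[OF c]]) simp
  then show ?thesis by (simp add: amin_Eps)
qed


definition Um :: "real \<Rightarrow> real measure" where "Um a = uniform_measure lborel {0..a}"
definition Qm :: "nat \<Rightarrow> real \<Rightarrow> (nat \<Rightarrow> real) measure" where "Qm m a = PiM {1..m} (\<lambda>_. Um a)"
definition OP :: "nat \<Rightarrow> nat \<Rightarrow> real \<Rightarrow> (nat \<Rightarrow> nat \<Rightarrow> real) measure" where
  "OP m T a = PiM {1..T} (\<lambda>_. Qm m a)"
definition OI :: "nat \<Rightarrow> nat \<Rightarrow> nat \<Rightarrow> (nat \<Rightarrow> nat \<Rightarrow> nat) measure" where
  "OI m T K = PiM {1..K} (\<lambda>i. measure_pmf (pmf_of_set (probe_choices m T K i)))"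
definition SI :: "nat \<Rightarrow> nat \<Rightarrow> nat \<Rightarrow> (nat \<Rightarrow> nat \<Rightarrow> nat) set" where
  "SI m T K = Pi\<^sub>E {1..K} (probe_choices m T K)"
definition projI :: "nat \<Rightarrow> nat \<Rightarrow> (nat \<Rightarrow> nat \<Rightarrow> nat) \<Rightarrow> (nat \<Rightarrow> nat \<Rightarrow> nat)" where
  "projI m K x = restrict (\<lambda>i. restrict (x i) {1..m}) {1..K}"

lemma space_eq: "rtop1f_space m T K \<epsilon> = OI m T K \<Otimes>\<^sub>M OP m T (1/\<epsilon>)"
  unfolding rtop1f_space_def OI_def OP_def Qm_def Um_def ..

lemma prob_Um: "a > 0 \<Longrightarrow> prob_space (Um a)"
  unfolding Um_def by (intro prob_space_uniform_measure) auto

lemma prob_Qm: "a > 0 \<Longrightarrow> prob_space (Qm m a)"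
  unfolding Qm_def by (intro prob_space_PiM prob_Um)

lemma prob_OP: "a > 0 \<Longrightarrow> prob_space (OP m T a)"
  unfolding OP_def by (intro prob_space_PiM prob_Qm)

lemma prob_OI: "prob_space (OI m T K)"
  unfolding OI_def by (intro prob_space_PiM measure_pmf.prob_space_axioms)

lemma finite_probe: "finite (probe_choices m T K i)"
  unfolding probe_choices_def
  by (rule finite_subset[of _ "{1..m} \<rightarrow>\<^sub>E block T K i"]) (auto intro: finite_PiE simp: block_def)

lemma probe_ne:
  assumes "i \<ge> 1" "m \<le> T div K"
  shows "probe_choices m T K i \<noteq> {}"
proof -
  define L where "L = T div K"
  define f where "f = restrict (\<lambda>j. (i - 1) * L + j) {1..m}"
  have h1: "f \<in> {1..m} \<rightarrow>\<^sub>E block T K i"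
    unfolding f_def block_def L_def[symmetric]
  proof (unfold restrict_PiE_iff, intro ballI)
    fix j assume j: "j \<in> {1..m}"
    have "(i - 1) * L + L = i * L" using assms(1) by (cases i) auto
    then show "(i - 1) * L + j \<in> {(i - 1) * L + 1..i * L}" using j assms(2) unfolding L_def by auto
  qed
  have h2: "inj_on f {1..m}" unfolding f_def by (auto simp: inj_on_def)
  have "f \<in> probe_choices m T K i" unfolding probe_choices_def using h1 h2 by simp
  then show ?thesis by auto
qed

lemma AE_Qm_bounds:
  assumes a: "a > 0"
  shows "AE p in Qm m a. \<forall>j\<in>{1..m}. 0 \<le> p j \<and> p j \<le> a"
proof -
  have "AE p in Qm m a. 0 \<le> p j \<and> p j \<le> a" if j: "j \<in> {1..m}" for j
  proof -
    have "AE x in Um a. 0 \<le> x \<and> x \<le> a"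
      unfolding Um_def by (rule AE_uniform_measureI) auto
    then show ?thesis unfolding Qm_def by (rule AE_PiM_component[OF prob_Um[OF a] j])
  qed
  then show ?thesis by (subst AE_finite_all) auto
qed

lemma integral_OP_comp:
  fixes \<psi> :: "(nat \<Rightarrow> real) \<Rightarrow> real"
  assumes a: "a > 0" and t: "t \<in> {1..T}" and psi: "\<psi> \<in> borel_measurable (Qm m a)"
  shows "(\<integral>P. \<psi> (P t) \<partial>OP m T a) = (\<integral>p. \<psi> p \<partial>Qm m a)"
proof -
  have d: "distr (OP m T a) (Qm m a) (\<lambda>P. P t) = Qm m a"
    unfolding OP_def by (rule distr_PiM_component[OF prob_Qm[OF a] t])
  have "(\<integral>p. \<psi> p \<partial>Qm m a) = (\<integral>p. \<psi> p \<partial>distr (OP m T a) (Qm m a) (\<lambda>P. P t))" by (simp add: d)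
  also have "\<dots> = (\<integral>P. \<psi> (P t) \<partial>OP m T a)"
    by (rule integral_distr[where g="\<lambda>P. P t"]) (use t psi in \<open>auto simp: OP_def\<close>)
  finally show ?thesis by simp
qed

lemma meas_OP_comp:
  assumes t: "t \<in> {1..T}" and psi: "\<psi> \<in> borel_measurable (Qm m a)"
  shows "(\<lambda>P. \<psi> (P t)) \<in> borel_measurable (OP m T a)"
  by (rule measurable_compose[OF _ psi]) (use t in \<open>simp add: OP_def\<close>)

lemma AE_OI_SI:
  assumes "\<And>i. i \<in> {1..K} \<Longrightarrow> probe_choices m T K i \<noteq> {}"
  shows "AE x in OI m T K. x \<in> SI m T K"
proof -
  have "AE x in OI m T K. x i \<in> probe_choices m T K i" if i: "i \<in> {1..K}" for i
  proof -
    have "AE y in measure_pmf (pmf_of_set (probe_choices m T K i)). y \<in> probe_choices m T K i"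
      using assms[OF i] finite_probe by (simp add: AE_measure_pmf_iff)
    then show ?thesis unfolding OI_def
      by (rule AE_PiM_component[OF measure_pmf.prob_space_axioms i])
  qed
  then have "AE x in OI m T K. \<forall>i\<in>{1..K}. x i \<in> probe_choices m T K i" by (subst AE_finite_all) auto
  moreover have "AE x in OI m T K. x \<in> space (OI m T K)" by simp
  ultimately show ?thesis
    by eventually_elim (auto simp: SI_def OI_def space_PiM PiE_iff)
qed

lemma measure_OI_single:
  assumes ne: "\<And>i. i \<in> {1..K} \<Longrightarrow> probe_choices m T K i \<noteq> {}" and x: "x \<in> SI m T K"
  shows "measure (OI m T K) {x} = 1 / real (card (SI m T K))"
proof -
  interpret product_prob_space "\<lambda>i. measure_pmf (pmf_of_set (probe_choices m T K i))"
    by (intro product_prob_spaceI measure_pmf.prob_space_axioms)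
  have xs: "{x} = Pi\<^sub>E {1..K} (\<lambda>i. {x i})" using x unfolding SI_def
    by (intro PiE_singleton[symmetric]) (simp add: PiE_iff)
  have "emeasure (OI m T K) {x} = (\<Prod>i\<in>{1..K}. emeasure (measure_pmf (pmf_of_set (probe_choices m T K i))) {x i})"
    unfolding OI_def xs by (rule emeasure_PiM) auto
  also have "\<dots> = (\<Prod>i\<in>{1..K}. ennreal (1 / real (card (probe_choices m T K i))))"
  proof (rule prod.cong[OF refl])
    fix i assume i: "i \<in> {1..K}"
    have xi: "x i \<in> probe_choices m T K i" using x i unfolding SI_def by auto
    show "emeasure (measure_pmf (pmf_of_set (probe_choices m T K i))) {x i} = ennreal (1 / real (card (probe_choices m T K i)))"
      using ne[OF i] finite_probe xi by (simp add: emeasure_pmf_single)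
  qed
  also have "\<dots> = ennreal (\<Prod>i\<in>{1..K}. 1 / real (card (probe_choices m T K i)))"
    by (rule prod_ennreal) auto
  also have "(\<Prod>i\<in>{1..K}. 1 / real (card (probe_choices m T K i))) = 1 / real (card (SI m T K))"
    unfolding SI_def by (simp add: card_PiE prod_dividef)
  finally have "emeasure (OI m T K) {x} = ennreal (1 / real (card (SI m T K)))" .
  then show ?thesis by (simp add: measure_def)
qed

lemma finite_SI: "finite (SI m T K)"
  unfolding SI_def by (intro finite_PiE finite_probe) auto

lemma SI_ne:
  assumes "\<And>i. i \<in> {1..K} \<Longrightarrow> probe_choices m T K i \<noteq> {}"
  shows "SI m T K \<noteq> {}"
  unfolding SI_def using assms by (simp add: PiE_eq_empty_iff)


lemma fs_integral:
  fixes g :: "'a \<Rightarrow> real"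
  assumes M: "prob_space M" and S: "finite S" and single: "\<And>x. x \<in> S \<Longrightarrow> {x} \<in> sets M"
    and AE: "AE x in M. x \<in> S" and g: "g \<in> borel_measurable M"
  shows "integral\<^sup>L M g = (\<Sum>x\<in>S. g x * measure M {x})"
proof -
  interpret prob_space M by (rule M)
  have mi: "(\<lambda>y. g x * indicator {x} y) \<in> borel_measurable M" if "x \<in> S" for x
    using single[OF that] by measurable
  have ii: "integrable M (\<lambda>y. g x * indicator {x} y)" if "x \<in> S" for x
  proof -
    have "emeasure M {x} < \<top>" by (simp add: emeasure_eq_measure)
    then show ?thesis using single[OF that] by (intro integrable_mult_right integrable_real_indicator) auto
  qed
  have "integral\<^sup>L M g = integral\<^sup>L M (\<lambda>y. \<Sum>x\<in>S. g x * indicator {x} y)"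
  proof (rule integral_cong_AE)
    show "g \<in> borel_measurable M" by (rule g)
    show "(\<lambda>y. \<Sum>x\<in>S. g x * indicator {x} y) \<in> borel_measurable M"
      by (rule borel_measurable_sum) (rule mi)
    show "AE y in M. g y = (\<Sum>x\<in>S. g x * indicator {x} y)"
      using AE
    proof eventually_elim
      case (elim y)
      have "(\<Sum>x\<in>S. g x * indicator {x} y) = (\<Sum>x\<in>S. if y = x then g x else 0)"
        by (rule sum.cong) (auto simp: indicator_def)
      also have "\<dots> = g y" using elim S by (simp add: sum.delta)
      finally show ?case by simp
    qed
  qed
  also have "\<dots> = (\<Sum>x\<in>S. integral\<^sup>L M (\<lambda>y. g x * indicator {x} y))"
    by (rule Bochner_Integration.integral_sum) (rule ii)
  also have "\<dots> = (\<Sum>x\<in>S. g x * measure M {x})"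
  proof (rule sum.cong[OF refl])
    fix x assume x: "x \<in> S"
    have "{x} \<inter> space M = {x}" using sets.sets_into_space[OF single[OF x]] by auto
    then show "integral\<^sup>L M (\<lambda>y. g x * indicator {x} y) = g x * measure M {x}" by simp
  qed
  finally show ?thesis .
qed

definition HI :: "nat \<Rightarrow> nat \<Rightarrow> (nat \<Rightarrow> nat \<Rightarrow> nat) set" where
  "HI m K = Pi\<^sub>E {1..K} (\<lambda>_. Pi\<^sub>E {1..m} (\<lambda>_. UNIV))"

lemma countable_HI: "countable (HI m K)"
  unfolding HI_def by (intro countable_PiE) auto

lemma meas_projI: "projI m K \<in> OI m T K \<rightarrow>\<^sub>M count_space (HI m K)"
proof (subst measurable_count_space_eq_countable[OF countable_HI], safe)
  fix x assume "x \<in> space (OI m T K)"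
  show "projI m K x \<in> HI m K" unfolding projI_def HI_def by auto
next
  fix a assume a: "a \<in> HI m K"
  have sp: "space (OI m T K) = Pi\<^sub>E {1..K} (\<lambda>i. UNIV)" unfolding OI_def by (simp add: space_PiM)
  have "x \<in> projI m K -` {a} \<inter> space (OI m T K) \<longleftrightarrow> x \<in> Pi\<^sub>E {1..K} (\<lambda>i. {y. restrict y {1..m} = a i})" for x
  proof
    assume L: "x \<in> projI m K -` {a} \<inter> space (OI m T K)"
    then have x: "x \<in> space (OI m T K)" and px: "projI m K x = a" by auto
    have "restrict (x i) {1..m} = a i" if "i \<in> {1..K}" for i
      using px that unfolding projI_def by (auto dest: fun_cong[where x=i])
    then show "x \<in> Pi\<^sub>E {1..K} (\<lambda>i. {y. restrict y {1..m} = a i})" using x unfolding sp by (auto simp: PiE_iff)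
  next
    assume x: "x \<in> Pi\<^sub>E {1..K} (\<lambda>i. {y. restrict y {1..m} = a i})"
    have "projI m K x = a"
    proof
      fix i show "projI m K x i = a i"
        using x a unfolding projI_def HI_def by (cases "i \<in> {1..K}") (auto simp: PiE_iff extensional_def)
    qed
    moreover have "x \<in> space (OI m T K)" using x unfolding sp by (auto simp: PiE_iff)
    ultimately show "x \<in> projI m K -` {a} \<inter> space (OI m T K)" by simp
  qed
  then have "projI m K -` {a} \<inter> space (OI m T K) = Pi\<^sub>E {1..K} (\<lambda>i. {y. restrict y {1..m} = a i})" by blast
  also have "\<dots> \<in> sets (OI m T K)" unfolding OI_def by (intro sets_PiM_I_finite) auto
  finally show "projI m K -` {a} \<inter> space (OI m T K) \<in> sets (OI m T K)" .
qed

lemma pair_integral: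
  fixes \<phi> :: "(nat \<Rightarrow> nat \<Rightarrow> nat) \<times> (nat \<Rightarrow> nat \<Rightarrow> real) \<Rightarrow> real"
  assumes a: "a > 0" and ne: "\<And>i. i \<in> {1..K} \<Longrightarrow> probe_choices m T K i \<noteq> {}"
    and inv: "\<And>x P. \<phi> (x, P) = \<phi> (projI m K x, P)"
    and meas: "\<And>h. (\<lambda>P. \<phi> (h, P)) \<in> borel_measurable (OP m T a)"
    and bnd: "\<And>z. \<bar>\<phi> z\<bar> \<le> B"
  shows "integrable (OI m T K \<Otimes>\<^sub>M OP m T a) \<phi>"
    and "integral\<^sup>L (OI m T K \<Otimes>\<^sub>M OP m T a) \<phi>
          = (\<Sum>x\<in>SI m T K. integral\<^sup>L (OP m T a) (\<lambda>P. \<phi> (x, P))) / real (card (SI m T K))"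
proof -
  interpret P: pair_prob_space "OI m T K" "OP m T a"
    unfolding pair_prob_space_def pair_sigma_finite_def
    using prob_OI prob_OP[OF a] by (simp add: prob_space_imp_sigma_finite)
  have m1: "\<phi> \<in> borel_measurable (count_space (HI m K) \<Otimes>\<^sub>M OP m T a)"
    by (rule measurable_pair_measure_countable1[OF countable_HI]) (rule meas)
  have m2: "(\<lambda>\<omega>. (projI m K (fst \<omega>), snd \<omega>)) \<in> (OI m T K \<Otimes>\<^sub>M OP m T a) \<rightarrow>\<^sub>M (count_space (HI m K) \<Otimes>\<^sub>M OP m T a)"
    by (intro measurable_Pair measurable_compose[OF measurable_fst meas_projI] measurable_snd)
  have "(\<lambda>\<omega>. \<phi> (projI m K (fst \<omega>), snd \<omega>)) \<in> borel_measurable (OI m T K \<Otimes>\<^sub>M OP m T a)"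
    by (rule measurable_compose[OF m2 m1])
  moreover have "(\<lambda>\<omega>. \<phi> (projI m K (fst \<omega>), snd \<omega>)) = \<phi>"
    using inv by (auto simp: fun_eq_iff)
  ultimately have mphi: "\<phi> \<in> borel_measurable (OI m T K \<Otimes>\<^sub>M OP m T a)" by simp
  show int: "integrable (OI m T K \<Otimes>\<^sub>M OP m T a) \<phi>"
    by (rule P.integrable_const_bound[where B=B]) (use bnd mphi in auto)
  have "integral\<^sup>L (OI m T K \<Otimes>\<^sub>M OP m T a) \<phi> = (\<integral>x. (\<integral>P. \<phi> (x, P) \<partial>OP m T a) \<partial>OI m T K)"
    by (rule P.integral_fst'[OF int, symmetric])
  also have "\<dots> = (\<Sum>x\<in>SI m T K. (\<integral>P. \<phi> (x, P) \<partial>OP m T a) * measure (OI m T K) {x})"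
  proof (rule fs_integral[OF prob_OI finite_SI])
    fix x assume x: "x \<in> SI m T K"
    show "{x} \<in> sets (OI m T K)"
    proof -
      have "{x} = Pi\<^sub>E {1..K} (\<lambda>i. {x i})" using x unfolding SI_def
        by (intro PiE_singleton[symmetric]) (simp add: PiE_iff)
      also have "\<dots> \<in> sets (OI m T K)" unfolding OI_def by (intro sets_PiM_I_finite) auto
      finally show ?thesis .
    qed
  next
    show "AE x in OI m T K. x \<in> SI m T K" by (rule AE_OI_SI[OF ne])
  next
    show "(\<lambda>x. \<integral>P. \<phi> (x, P) \<partial>OP m T a) \<in> borel_measurable (OI m T K)"
      using mphi by (intro P.M2.borel_measurable_lebesgue_integral) simp
  qed
  also have "\<dots> = (\<Sum>x\<in>SI m T K. (\<integral>P. \<phi> (x, P) \<partial>OP m T a) / real (card (SI m T K)))"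
  proof (rule sum.cong[OF refl])
    fix x assume x: "x \<in> SI m T K"
    have "measure (OI m T K) {x} = 1 / real (card (SI m T K))" by (rule measure_OI_single[OF ne x])
    then show "(\<integral>P. \<phi> (x, P) \<partial>OP m T a) * measure (OI m T K) {x} = (\<integral>P. \<phi> (x, P) \<partial>OP m T a) / real (card (SI m T K))"
      by simp
  qed
  also have "\<dots> = (\<Sum>x\<in>SI m T K. integral\<^sup>L (OP m T a) (\<lambda>P. \<phi> (x, P))) / real (card (SI m T K))"
    by (simp add: sum_divide_distrib)
  finally show "integral\<^sup>L (OI m T K \<Otimes>\<^sub>M OP m T a) \<phi>
          = (\<Sum>x\<in>SI m T K. integral\<^sup>L (OP m T a) (\<lambda>P. \<phi> (x, P))) / real (card (SI m T K))" .
qed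


lemma sets_Um[measurable_cong]: "sets (Um a) = sets borel"
  unfolding Um_def by simp

lemma space_Um: "space (Um a) = UNIV"
  unfolding Um_def by simp

lemma shift_1d:
  fixes G :: "real \<Rightarrow> ennreal"
  assumes a: "a > 0" and G[measurable]: "G \<in> borel_measurable borel"
    and bnd: "\<And>y. G y \<le> ennreal B" and B: "B \<ge> 0"
  shows "(\<integral>\<^sup>+y. G (y + 1) \<partial>Um a) \<le> (\<integral>\<^sup>+y. G y \<partial>Um a) + ennreal (B / a)"
proof -
  have G1[measurable]: "(\<lambda>y. G (y + 1)) \<in> borel_measurable borel" by measurable
  have e: "emeasure lborel {0..a} = ennreal a" using a by simp
  have u1: "(\<integral>\<^sup>+y. G (y + 1) \<partial>Um a) = (\<integral>\<^sup>+y. G (y + 1) * indicator {0..a} y \<partial>lborel) / ennreal a"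
    unfolding Um_def by (subst nn_integral_uniform_measure) (auto simp: e)
  have u2: "(\<integral>\<^sup>+y. G y \<partial>Um a) = (\<integral>\<^sup>+y. G y * indicator {0..a} y \<partial>lborel) / ennreal a"
    unfolding Um_def by (subst nn_integral_uniform_measure) (auto simp: e)
  have shift: "(\<integral>\<^sup>+z. G z * indicator {1..a+1} z \<partial>lborel) = (\<integral>\<^sup>+y. G (y + 1) * indicator {0..a} y \<partial>lborel)"
  proof -
    have "(\<integral>\<^sup>+z. G z * indicator {1..a+1} z \<partial>lborel)
        = ennreal \<bar>1\<bar> * (\<integral>\<^sup>+x. G (1 + 1 * x) * indicator {1..a+1} (1 + 1 * x) \<partial>lborel)"
      by (rule nn_integral_real_affine) auto
    also have "\<dots> = (\<integral>\<^sup>+y. G (y + 1) * indicator {0..a} y \<partial>lborel)"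
      unfolding abs_one ennreal_1 mult_1_left
      by (intro nn_integral_cong) (auto simp: indicator_def add.commute)
    finally show ?thesis .
  qed
  have pw: "G z * indicator {1..a+1} z \<le> G z * indicator {0..a} z + ennreal B * indicator {a..a+1} z" for z
  proof (cases "z \<in> {1..a+1}")
    case False
    then show ?thesis by simp
  next
    case True
    show ?thesis
    proof (cases "z \<le> a")
      case True
      then have "z \<in> {0..a}" using \<open>z \<in> {1..a+1}\<close> by auto
      then show ?thesis using \<open>z \<in> {1..a+1}\<close> by (simp add: add_increasing2)
    next
      case False
      then have "z \<in> {a..a+1}" using \<open>z \<in> {1..a+1}\<close> by auto
      then show ?thesis using bnd[of z] \<open>z \<in> {1..a+1}\<close> by (simp add: add_increasing)
    qed
  qed
  have "(\<integral>\<^sup>+z. G z * indicator {1..a+1} z \<partial>lborel)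
      \<le> (\<integral>\<^sup>+z. G z * indicator {0..a} z + ennreal B * indicator {a..a+1} z \<partial>lborel)"
    by (rule nn_integral_mono) (rule pw)
  also have "\<dots> = (\<integral>\<^sup>+z. G z * indicator {0..a} z \<partial>lborel) + (\<integral>\<^sup>+z. ennreal B * indicator {a..a+1} z \<partial>lborel)"
    by (rule nn_integral_add) auto
  also have "(\<integral>\<^sup>+z. ennreal B * indicator {a..a+1} z \<partial>lborel) = ennreal B"
    by (subst nn_integral_cmult_indicator) auto
  finally have le: "(\<integral>\<^sup>+y. G (y + 1) * indicator {0..a} y \<partial>lborel)
      \<le> (\<integral>\<^sup>+z. G z * indicator {0..a} z \<partial>lborel) + ennreal B" unfolding shift .
  have "(\<integral>\<^sup>+y. G (y + 1) \<partial>Um a) \<le> ((\<integral>\<^sup>+z. G z * indicator {0..a} z \<partial>lborel) + ennreal B) / ennreal a"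
    unfolding u1 by (rule divide_right_mono_ennreal[OF le])
  also have "\<dots> = (\<integral>\<^sup>+y. G y \<partial>Um a) + ennreal B / ennreal a"
    unfolding u2 by (rule add_divide_distrib_ennreal)
  also have "ennreal B / ennreal a = ennreal (B / a)" using B a by (rule divide_ennreal)
  finally show ?thesis .
qed

definition shJ :: "nat set \<Rightarrow> (nat \<Rightarrow> real) \<Rightarrow> (nat \<Rightarrow> real)" where
  "shJ J p = (\<lambda>i. if i \<in> J then p i + 1 else p i)"

lemma meas_upd1:
  assumes j: "j \<in> {1..m}"
  shows "(\<lambda>p. p(j := p j + 1)) \<in> Qm m a \<rightarrow>\<^sub>M Qm m a"
proof -
  have meas: "(\<lambda>p i. (\<lambda>i p. if i = j then p j + 1 else p i) i p) \<in> Qm m a \<rightarrow>\<^sub>M Qm m a"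
    unfolding Qm_def
  proof (rule measurable_PiM_single')
    fix i assume i: "i \<in> {1..m}"
    show "(\<lambda>p. if i = j then p j + 1 else p i) \<in> Pi\<^sub>M {1..m} (\<lambda>_. Um a) \<rightarrow>\<^sub>M Um a"
      using i j by (cases "i = j") (simp_all add: measurable_cong_sets[OF refl sets_Um])
  next
    show "(\<lambda>p i. if i = j then p j + 1 else p i) \<in> space (Pi\<^sub>M {1..m} (\<lambda>_. Um a)) \<rightarrow> (\<Pi>\<^sub>E i\<in>{1..m}. space (Um a))"
      using j by (auto simp: space_PiM PiE_iff space_Um extensional_def)
  qed
  have eq: "(\<lambda>p. p(j := p j + 1)) = (\<lambda>p i. (\<lambda>i p. if i = j then p j + 1 else p i) i p)"
    by (auto simp: fun_eq_iff)
  show ?thesis unfolding eq by (rule meas)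
qed

lemma meas_shJ:
  assumes J: "J \<subseteq> {1..m}"
  shows "shJ J \<in> Qm m a \<rightarrow>\<^sub>M Qm m a"
proof -
  have "(\<lambda>p i. (\<lambda>i p. if i \<in> J then p i + 1 else p i) i p) \<in> Qm m a \<rightarrow>\<^sub>M Qm m a"
    unfolding Qm_def
  proof (rule measurable_PiM_single')
    fix i assume i: "i \<in> {1..m}"
    show "(\<lambda>p. if i \<in> J then p i + 1 else p i) \<in> Pi\<^sub>M {1..m} (\<lambda>_. Um a) \<rightarrow>\<^sub>M Um a"
      using i by (cases "i \<in> J") (simp_all add: measurable_cong_sets[OF refl sets_Um])
  next
    show "(\<lambda>p i. if i \<in> J then p i + 1 else p i) \<in> space (Pi\<^sub>M {1..m} (\<lambda>_. Um a)) \<rightarrow> (\<Pi>\<^sub>E i\<in>{1..m}. space (Um a))"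
      using J by (auto simp: space_PiM PiE_iff space_Um extensional_def)
  qed
  then show ?thesis unfolding shJ_def by simp
qed


lemma meas_upd_pair:
  assumes j: "j \<notin> I"
  shows "(\<lambda>(x, y). x(j := y)) \<in> (Pi\<^sub>M I (\<lambda>_. Um a) \<Otimes>\<^sub>M Um a) \<rightarrow>\<^sub>M Pi\<^sub>M (insert j I) (\<lambda>_. Um a)"
proof -
  have meas: "(\<lambda>z i. (\<lambda>i z. if i = j then snd z else fst z i) i z) \<in> (Pi\<^sub>M I (\<lambda>_. Um a) \<Otimes>\<^sub>M Um a) \<rightarrow>\<^sub>M Pi\<^sub>M (insert j I) (\<lambda>_. Um a)"
  proof (rule measurable_PiM_single')
    fix i assume i: "i \<in> insert j I"
    show "(\<lambda>z. if i = j then snd z else fst z i) \<in> (Pi\<^sub>M I (\<lambda>_. Um a) \<Otimes>\<^sub>M Um a) \<rightarrow>\<^sub>M Um a"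
    proof (cases "i = j")
      case True then show ?thesis by simp
    next
      case False then have "i \<in> I" using i by simp
      then show ?thesis using False by simp
    qed
  next
    show "(\<lambda>z i. if i = j then snd z else fst z i) \<in> space (Pi\<^sub>M I (\<lambda>_. Um a) \<Otimes>\<^sub>M Um a) \<rightarrow> (\<Pi>\<^sub>E i\<in>insert j I. space (Um a))"
      by (auto simp: space_pair_measure space_PiM PiE_iff space_Um extensional_def split: if_split_asm)
  qed
  have eq: "(\<lambda>(x, y). x(j := y)) = (\<lambda>z i. (\<lambda>i z. if i = j then snd z else fst z i) i z)"
    by (auto simp: fun_eq_iff)
  show ?thesis unfolding eq by (rule meas)
qed

lemma shift1:
  fixes g :: "(nat \<Rightarrow> real) \<Rightarrow> ennreal"
  assumes a: "a > 0" and j: "j \<in> {1..m}" and g: "g \<in> borel_measurable (Qm m a)"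
    and bnd: "\<And>p. g p \<le> ennreal B" and B: "B \<ge> 0"
  shows "(\<integral>\<^sup>+p. g (p(j := p j + 1)) \<partial>Qm m a) \<le> (\<integral>\<^sup>+p. g p \<partial>Qm m a) + ennreal (B / a)"
proof -
  interpret product_prob_space "\<lambda>_::nat. Um a" by (intro product_prob_spaceI prob_Um[OF a])
  interpret U: prob_space "Um a" by (rule prob_Um[OF a])
  define I where "I = {1..m} - {j}"
  have I: "finite I" "j \<notin> I" unfolding I_def by auto
  have ins: "insert j I = {1..m}" using j unfolding I_def by auto
  have Q: "Qm m a = Pi\<^sub>M (insert j I) (\<lambda>_. Um a)" unfolding Qm_def ins ..
  have g': "g \<in> borel_measurable (Pi\<^sub>M (insert j I) (\<lambda>_. Um a))" using g Q by simp
  have f1: "(\<lambda>p. g (p(j := p j + 1))) \<in> borel_measurable (Pi\<^sub>M (insert j I) (\<lambda>_. Um a))"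
    using measurable_compose[OF meas_upd1[OF j] g] Q by simp
  have pI: "prob_space (Pi\<^sub>M I (\<lambda>_. Um a))" by (intro prob_space_PiM prob_Um[OF a])
  have Gm: "(\<lambda>y. g (x(j := y))) \<in> borel_measurable borel" if x: "x \<in> space (Pi\<^sub>M I (\<lambda>_. Um a))" for x
  proof -
    have "(\<lambda>y. g (x(j := y))) \<in> borel_measurable (Um a)"
      by (rule measurable_compose[OF measurable_component_update[OF x I(2)] g'])
    then show ?thesis by (simp add: measurable_cong_sets[OF sets_Um refl])
  qed
  have L: "(\<integral>\<^sup>+p. g (p(j := p j + 1)) \<partial>Qm m a) = (\<integral>\<^sup>+x. (\<integral>\<^sup>+y. g (x(j := y + 1)) \<partial>Um a) \<partial>Pi\<^sub>M I (\<lambda>_. Um a))"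
    unfolding Q by (subst product_nn_integral_insert[OF I f1]) simp
  have R: "(\<integral>\<^sup>+p. g p \<partial>Qm m a) = (\<integral>\<^sup>+x. (\<integral>\<^sup>+y. g (x(j := y)) \<partial>Um a) \<partial>Pi\<^sub>M I (\<lambda>_. Um a))"
    unfolding Q by (rule product_nn_integral_insert[OF I g'])
  have "(\<integral>\<^sup>+x. (\<integral>\<^sup>+y. g (x(j := y + 1)) \<partial>Um a) \<partial>Pi\<^sub>M I (\<lambda>_. Um a))
      \<le> (\<integral>\<^sup>+x. (\<integral>\<^sup>+y. g (x(j := y)) \<partial>Um a) + ennreal (B / a) \<partial>Pi\<^sub>M I (\<lambda>_. Um a))"
  proof (rule nn_integral_mono)
    fix x assume x: "x \<in> space (Pi\<^sub>M I (\<lambda>_. Um a))"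
    show "(\<integral>\<^sup>+y. g (x(j := y + 1)) \<partial>Um a) \<le> (\<integral>\<^sup>+y. g (x(j := y)) \<partial>Um a) + ennreal (B / a)"
      using shift_1d[OF a Gm[OF x] bnd B] by simp
  qed
  also have "\<dots> = (\<integral>\<^sup>+x. (\<integral>\<^sup>+y. g (x(j := y)) \<partial>Um a) \<partial>Pi\<^sub>M I (\<lambda>_. Um a)) + (\<integral>\<^sup>+x. ennreal (B / a) \<partial>Pi\<^sub>M I (\<lambda>_. Um a))"
  proof (rule nn_integral_add)
    have "(\<lambda>(x, y). g (x(j := y))) \<in> borel_measurable (Pi\<^sub>M I (\<lambda>_. Um a) \<Otimes>\<^sub>M Um a)"
    proof -
      have "(\<lambda>z. g ((\<lambda>(x, y). x(j := y)) z)) \<in> borel_measurable (Pi\<^sub>M I (\<lambda>_. Um a) \<Otimes>\<^sub>M Um a)"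
        by (rule measurable_compose[OF meas_upd_pair[OF I(2)] g'])
      then show ?thesis by (simp add: case_prod_beta)
    qed
    then show "(\<lambda>x. \<integral>\<^sup>+y. g (x(j := y)) \<partial>Um a) \<in> borel_measurable (Pi\<^sub>M I (\<lambda>_. Um a))"
      by (rule sigma_finite_measure.borel_measurable_nn_integral[OF prob_space_imp_sigma_finite[OF prob_Um[OF a]]])
  qed simp
  also have "(\<integral>\<^sup>+x. ennreal (B / a) \<partial>Pi\<^sub>M I (\<lambda>_. Um a)) = ennreal (B / a)"
    using prob_space.emeasure_space_1[OF pI] by simp
  finally show ?thesis unfolding L R .
qed

lemma shJ_insert: "j \<notin> J \<Longrightarrow> shJ (insert j J) p = shJ J (p(j := p j + 1))"
  unfolding shJ_def by (auto simp: fun_eq_iff)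

lemma shiftJ:
  fixes g :: "(nat \<Rightarrow> real) \<Rightarrow> ennreal"
  assumes a: "a > 0" and J: "J \<subseteq> {1..m}" and g: "g \<in> borel_measurable (Qm m a)"
    and bnd: "\<And>p. g p \<le> ennreal B" and B: "B \<ge> 0"
  shows "(\<integral>\<^sup>+p. g (shJ J p) \<partial>Qm m a) \<le> (\<integral>\<^sup>+p. g p \<partial>Qm m a) + ennreal (real (card J) * B / a)"
proof -
  have "finite J" using J by (rule finite_subset) simp
  then show ?thesis using J
  proof (induction J rule: finite_induct)
    case empty
    then show ?case by (simp add: shJ_def)
  next
    case (insert j J)
    have j: "j \<in> {1..m}" and J: "J \<subseteq> {1..m}" using insert.prems by auto
    have gJ: "(\<lambda>p. g (shJ J p)) \<in> borel_measurable (Qm m a)"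
      by (rule measurable_compose[OF meas_shJ[OF J] g])
    have "(\<integral>\<^sup>+p. g (shJ (insert j J) p) \<partial>Qm m a) = (\<integral>\<^sup>+p. g (shJ J (p(j := p j + 1))) \<partial>Qm m a)"
      using insert.hyps by (simp add: shJ_insert)
    also have "\<dots> \<le> (\<integral>\<^sup>+p. g (shJ J p) \<partial>Qm m a) + ennreal (B / a)"
      by (rule shift1[OF a j gJ bnd B])
    also have "\<dots> \<le> (\<integral>\<^sup>+p. g p \<partial>Qm m a) + ennreal (real (card J) * B / a) + ennreal (B / a)"
      using insert.IH[OF J] by (simp add: add_right_mono)
    also have "\<dots> = (\<integral>\<^sup>+p. g p \<partial>Qm m a) + ennreal (real (card (insert j J)) * B / a)"
    proof -
      have "ennreal (real (card J) * B / a) + ennreal (B / a) = ennreal (real (card J) * B / a + B / a)"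
        using a B by (intro ennreal_plus[symmetric]) auto
      also have "real (card J) * B / a + B / a = real (card (insert j J)) * B / a"
        using insert.hyps by (simp add: add_divide_distrib[symmetric] algebra_simps)
      finally show ?thesis by (simp add: add.assoc)
    qed
    finally show ?case .
  qed
qed

lemma stability:
  fixes h :: "(nat \<Rightarrow> real) \<Rightarrow> real"
  assumes a: "a > 0" and J: "J \<subseteq> {1..m}" and h: "h \<in> borel_measurable (Qm m a)"
    and bnd: "\<And>p. 0 \<le> h p \<and> h p \<le> B"
  shows "(\<integral>p. h (shJ J p) \<partial>Qm m a) \<le> (\<integral>p. h p \<partial>Qm m a) + real (card J) * B / a"
proof -
  interpret Q: prob_space "Qm m a" by (rule prob_Qm[OF a])
  have B: "B \<ge> 0" using bnd[of undefined] by linarith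
  have hs: "(\<lambda>p. h (shJ J p)) \<in> borel_measurable (Qm m a)"
    by (rule measurable_compose[OF meas_shJ[OF J] h])
  have i1: "integrable (Qm m a) h"
    by (rule Q.integrable_const_bound[where B=B]) (use bnd h in auto)
  have i2: "integrable (Qm m a) (\<lambda>p. h (shJ J p))"
    by (rule Q.integrable_const_bound[where B=B]) (use bnd hs in auto)
  have "ennreal (\<integral>p. h (shJ J p) \<partial>Qm m a) = (\<integral>\<^sup>+p. ennreal (h (shJ J p)) \<partial>Qm m a)"
    by (rule nn_integral_eq_integral[OF i2, symmetric]) (use bnd in auto)
  also have "\<dots> \<le> (\<integral>\<^sup>+p. ennreal (h p) \<partial>Qm m a) + ennreal (real (card J) * B / a)"
    by (rule shiftJ[OF a J, where g="\<lambda>p. ennreal (h p)" and B=B]) (use h bnd B in auto)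
  also have "(\<integral>\<^sup>+p. ennreal (h p) \<partial>Qm m a) = ennreal (\<integral>p. h p \<partial>Qm m a)"
    by (rule nn_integral_eq_integral[OF i1]) (use bnd in auto)
  also have "ennreal (\<integral>p. h p \<partial>Qm m a) + ennreal (real (card J) * B / a)
      = ennreal ((\<integral>p. h p \<partial>Qm m a) + real (card J) * B / a)"
    by (rule ennreal_plus[symmetric]) (use bnd B a in \<open>auto intro: integral_nonneg_AE\<close>)
  finally show ?thesis
    by (subst (asm) ennreal_le_iff) (use bnd B a in \<open>auto intro!: add_nonneg_nonneg integral_nonneg_AE\<close>)
qed


lemma objv_cong: "(\<And>j. j \<in> {1..m} \<Longrightarrow> c j = c' j) \<Longrightarrow> objv m c = objv m c'"
  unfolding objv_def by (intro ext sum.cong) auto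

lemma amin_cong:
  assumes "\<And>j. j \<in> {1..m} \<Longrightarrow> c j = c' j" shows "amin m c = amin m c'"
proof -
  have "objv m c = objv m c'" by (rule objv_cong) (rule assms)
  then show ?thesis unfolding amin_def by simp
qed

lemma gv_cong:
  assumes "\<And>j. j \<in> {1..m} \<Longrightarrow> c j = c' j" shows "gv m k c = gv m k c'"
proof -
  have "amin m c = amin m c'" by (rule amin_cong) (rule assms)
  then show ?thesis unfolding gv_def by simp
qed

lemma meas_amin_Q:
  fixes F :: "(nat \<Rightarrow> nat) \<Rightarrow> real"
  shows "(\<lambda>p. F (amin m (\<lambda>j. s j + p j))) \<in> borel_measurable (Qm m a)"
proof -
  have "(\<lambda>p. F (amin m (\<lambda>j. (\<lambda>j p. if j \<in> {1..m} then s j + p j else 0) j p))) \<in> borel_measurable (Qm m a)"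
  proof (rule meas_amin_real)
    fix j show "(\<lambda>p. if j \<in> {1..m} then s j + p j else 0) \<in> borel_measurable (Qm m a)"
    proof (cases "j \<in> {1..m}")
      case True
      have "(\<lambda>p. p j) \<in> Qm m a \<rightarrow>\<^sub>M Um a" unfolding Qm_def using True by simp
      then have "(\<lambda>p. p j) \<in> borel_measurable (Qm m a)" by (simp add: measurable_cong_sets[OF refl sets_Um])
      then have "(\<lambda>p. s j + p j) \<in> borel_measurable (Qm m a)" by measurable
      then show ?thesis using True by simp
    next
      case False
      then have "(\<lambda>p. if j \<in> {1..m} then s j + p j else 0) = (\<lambda>p. 0)" by (intro ext) (simp only: if_False)
      then show ?thesis by simp
    qed
  qed
  moreover have "amin m (\<lambda>j. (\<lambda>j p. if j \<in> {1..m} then s j + p j else 0) j p) = amin m (\<lambda>j. s j + p j)" for p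
    by (rule amin_cong) simp
  ultimately show ?thesis by simp
qed

lemma meas_amin_OP:
  fixes F :: "(nat \<Rightarrow> nat) \<Rightarrow> real"
  assumes t: "t \<in> {1..T}"
  shows "(\<lambda>P. F (amin m (\<lambda>j. s j + P t j))) \<in> borel_measurable (OP m T a)"
  using meas_OP_comp[OF t meas_amin_Q[of F m s a]] by simp

lemma prec_nonneg:
  assumes "\<And>j. j \<in> {1..m} \<Longrightarrow> 0 \<le> u j"
  shows "0 \<le> prec_at m k \<sigma> u"
  unfolding prec_at_def using assms by (intro sum_nonneg) auto

lemma prec_le:
  assumes "\<And>j. j \<in> {1..m} \<Longrightarrow> u j \<le> 1" "\<And>j. j \<in> {1..m} \<Longrightarrow> 0 \<le> u j"
  shows "prec_at m k \<sigma> u \<le> real m"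
proof -
  have "prec_at m k \<sigma> u \<le> (\<Sum>i\<in>{1..m}. 1)" unfolding prec_at_def
    by (rule sum_mono) (use assms in auto)
  then show ?thesis by simp
qed

lemma gv_bound:
  assumes "\<And>j. j \<in> {1..m} \<Longrightarrow> 0 \<le> u j \<and> u j \<le> 1"
  shows "0 \<le> dotp m (gv m k c) u" "dotp m (gv m k c) u \<le> real k"
  using dotp_topv_bound[OF amin_in[of m c], where u=u and B=1 and k=k] assms unfolding gv_def by auto

locale rsetup =
  fixes m k T K L :: nat and a :: real and r :: "nat \<Rightarrow> nat \<Rightarrow> real" and top1 :: "nat \<Rightarrow> nat \<Rightarrow> nat \<Rightarrow> nat"
  assumes m1: "1 \<le> m" and K1: "1 \<le> K" and dvd: "K dvd T" and L_def: "L = T div K"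
    and mL: "m \<le> L" and a: "a > 0"
    and r01: "\<And>t j. t \<in> {1..T} \<Longrightarrow> j \<in> {1..m} \<Longrightarrow> r t j \<in> {0, 1}"
begin

lemma L1: "L \<ge> 1" using m1 mL by simp
lemma TKL: "T = K * L" using dvd L_def by simp

lemma r_bnd: "t \<in> {1..T} \<Longrightarrow> j \<in> {1..m} \<Longrightarrow> 0 \<le> r t j \<and> r t j \<le> 1"
  using r01[of t j] by auto

lemma partition: "{1..T} = (\<Union>i\<in>{1..K}. block T K i)"
  using blocks_partition[OF K1 dvd] L1 L_def by simp

lemma block_sub: "i \<in> {1..K} \<Longrightarrow> block T K i \<subseteq> {1..T}"
  using partition by blast

lemma sum_blocks: "(\<Sum>t\<in>{1..T}. f t) = (\<Sum>i\<in>{1..K}. \<Sum>t\<in>block T K i. f t)"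
proof -
  have "(\<Sum>t\<in>{1..T}. f t) = (\<Sum>t\<in>(\<Union>i\<in>{1..K}. block T K i). f t)" using partition by simp
  also have "\<dots> = (\<Sum>i\<in>{1..K}. \<Sum>t\<in>block T K i. f t)"
    by (rule sum.UNION_disjoint) (use blocks_disjoint[of T K] L1 L_def in \<open>auto simp: block_def\<close>)
  finally show ?thesis .
qed

lemma bo: "i \<in> {1..K} \<Longrightarrow> t \<in> block T K i \<Longrightarrow> block_of T K t = i"
  using block_of_block[of t T K i] L1 L_def by auto

lemma bo_range: "t \<in> {1..T} \<Longrightarrow> block_of T K t \<in> {1..K}"
  using partition bo by blast

lemma probe_ne': "i \<in> {1..K} \<Longrightarrow> probe_choices m T K i \<noteq> {}"
  using probe_ne[of i m T K] mL L_def by auto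

lemma action_exploit:
  assumes "block_of T K t = i" "\<not> (\<exists>j\<in>{1..m}. x i j = t)"
  shows "rtop1f_action m T K top1 r (x, P) t = amin m (\<lambda>j. s_hat r x i j + P t j)"
  using assms unfolding rtop1f_action_def amin_def objv_def perms_def Let_def by simp

lemma stepA_block:
  fixes x P
  assumes i: "i \<in> {1..K}"
  shows "(\<Sum>t\<in>block T K i. prec_at m k (rtop1f_action m T K top1 r (x, P) t) (r t))
     \<ge> (\<Sum>t\<in>block T K i. dotp m (gv m k (\<lambda>j. s_hat r x i j + P t j)) (r t)) - real m * real k"
proof -
  define B where "B = block T K i"
  define X where "X = {t\<in>B. \<exists>j\<in>{1..m}. x i j = t}"
  have fB: "finite B" unfolding B_def block_def by simp
  have cX: "card X \<le> m"
  proof -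
    have "X \<subseteq> x i ` {1..m}" unfolding X_def by auto
    then have "card X \<le> card (x i ` {1..m})" by (intro card_mono) auto
    also have "\<dots> \<le> card {1..m}" by (rule card_image_le) simp
    finally show ?thesis by simp
  qed
  have pw: "prec_at m k (rtop1f_action m T K top1 r (x, P) t) (r t)
      \<ge> dotp m (gv m k (\<lambda>j. s_hat r x i j + P t j)) (r t) - (if t \<in> X then real k else 0)"
    if t: "t \<in> B" for t
  proof -
    have tT: "t \<in> {1..T}" using block_sub[OF i] t unfolding B_def by auto
    have rb: "\<And>j. j \<in> {1..m} \<Longrightarrow> 0 \<le> r t j \<and> r t j \<le> 1" using r_bnd[OF tT] by auto
    have bt: "block_of T K t = i" using bo[OF i] t unfolding B_def by simp
    show ?thesis
    proof (cases "t \<in> X")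
      case True
      have "0 \<le> prec_at m k (rtop1f_action m T K top1 r (x, P) t) (r t)"
        using rb by (intro prec_nonneg) auto
      moreover have "dotp m (gv m k (\<lambda>j. s_hat r x i j + P t j)) (r t) \<le> real k"
        by (rule gv_bound(2)) (use rb in auto)
      ultimately show ?thesis using True by simp
    next
      case False
      then have "\<not> (\<exists>j\<in>{1..m}. x i j = t)" using t unfolding X_def by auto
      then have "rtop1f_action m T K top1 r (x, P) t = amin m (\<lambda>j. s_hat r x i j + P t j)"
        by (rule action_exploit[OF bt])
      then show ?thesis using False by (simp add: prec_at_dotp gv_def)
    qed
  qed
  have "(\<Sum>t\<in>B. dotp m (gv m k (\<lambda>j. s_hat r x i j + P t j)) (r t)) - real k * real (card X)
      = (\<Sum>t\<in>B. dotp m (gv m k (\<lambda>j. s_hat r x i j + P t j)) (r t) - (if t \<in> X then real k else 0))"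
  proof -
    have "(\<Sum>t\<in>B. (if t \<in> X then real k else 0)) = real k * real (card X)"
      using fB unfolding X_def by (simp add: sum.If_cases Int_def)
    then show ?thesis by (simp add: sum_subtractf)
  qed
  also have "\<dots> \<le> (\<Sum>t\<in>B. prec_at m k (rtop1f_action m T K top1 r (x, P) t) (r t))"
    by (rule sum_mono) (rule pw)
  finally have "(\<Sum>t\<in>B. dotp m (gv m k (\<lambda>j. s_hat r x i j + P t j)) (r t)) - real k * real (card X)
      \<le> (\<Sum>t\<in>B. prec_at m k (rtop1f_action m T K top1 r (x, P) t) (r t))" .
  moreover have "real k * real (card X) \<le> real m * real k"
  proof -
    have "real (card X) \<le> real m" using cX by simp
    then have "real k * real (card X) \<le> real k * real m" by (rule mult_left_mono) simp
    then show ?thesis by (simp add: mult.commute)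
  qed
  ultimately show ?thesis unfolding B_def by linarith
qed

definition fI :: "(nat \<Rightarrow> nat \<Rightarrow> nat) \<times> (nat \<Rightarrow> nat \<Rightarrow> real) \<Rightarrow> real" where
  "fI \<omega> = (\<Sum>t\<in>{1..T}. prec_at m k (rtop1f_action m T K top1 r \<omega> t) (r t))"

definition lbI :: "(nat \<Rightarrow> nat \<Rightarrow> nat) \<times> (nat \<Rightarrow> nat \<Rightarrow> real) \<Rightarrow> real" where
  "lbI \<omega> = (\<Sum>i\<in>{1..K}. \<Sum>t\<in>block T K i. dotp m (gv m k (\<lambda>j. s_hat r (fst \<omega>) i j + snd \<omega> t j)) (r t))"

lemma stepA: "fI (x, P) \<ge> lbI (x, P) - real K * real m * real k"
proof -
  have "lbI (x, P) - real K * real m * real k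
      = (\<Sum>i\<in>{1..K}. (\<Sum>t\<in>block T K i. dotp m (gv m k (\<lambda>j. s_hat r x i j + P t j)) (r t)) - real m * real k)"
    unfolding lbI_def by (simp add: sum_subtractf)
  also have "\<dots> \<le> (\<Sum>i\<in>{1..K}. \<Sum>t\<in>block T K i. prec_at m k (rtop1f_action m T K top1 r (x, P) t) (r t))"
    by (rule sum_mono) (rule stepA_block)
  also have "\<dots> = fI (x, P)" unfolding fI_def by (rule sum_blocks[symmetric])
  finally show ?thesis .
qed

lemma action_form:
  "rtop1f_action m T K top1 r (x, P) t = (if \<exists>j\<in>{1..m}. x (block_of T K t) j = t
      then top1 t (THE j. j \<in> {1..m} \<and> x (block_of T K t) j = t)
      else amin m (\<lambda>j. s_hat r x (block_of T K t) j + P t j))"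
  unfolding rtop1f_action_def amin_def objv_def perms_def Let_def by simp

lemma projI_eq: "i \<in> {1..K} \<Longrightarrow> j \<in> {1..m} \<Longrightarrow> projI m K x i j = x i j"
  unfolding projI_def by simp

lemma s_hat_proj:
  assumes i: "i \<in> {1..K}"
  shows "s_hat r (projI m K x) i j = s_hat r x i j \<or> j \<notin> {1..m}"
proof (cases "j \<in> {1..m}")
  case True
  have "s_hat r (projI m K x) i j = s_hat r x i j"
    unfolding s_hat_def by (rule sum.cong[OF refl]) (use i True in \<open>simp add: projI_eq\<close>)
  then show ?thesis by simp
qed simp

lemma s_hat_proj': "i \<in> {1..K} \<Longrightarrow> j \<in> {1..m} \<Longrightarrow> s_hat r (projI m K x) i j = s_hat r x i j"
  using s_hat_proj by blast

lemma action_proj: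
  assumes t: "t \<in> {1..T}"
  shows "rtop1f_action m T K top1 r (projI m K x, P) t = rtop1f_action m T K top1 r (x, P) t"
proof -
  define i where "i = block_of T K t"
  have i: "i \<in> {1..K}" unfolding i_def by (rule bo_range[OF t])
  have e1: "(\<exists>j\<in>{1..m}. projI m K x i j = t) = (\<exists>j\<in>{1..m}. x i j = t)"
    using i by (simp add: projI_eq)
  have e2: "(\<lambda>j. j \<in> {1..m} \<and> projI m K x i j = t) = (\<lambda>j. j \<in> {1..m} \<and> x i j = t)"
    using i by (auto simp: projI_eq)
  have e3: "amin m (\<lambda>j. s_hat r (projI m K x) i j + P t j) = amin m (\<lambda>j. s_hat r x i j + P t j)"
    by (rule amin_cong) (simp add: s_hat_proj'[OF i])
  show ?thesis unfolding action_form i_def[symmetric] e1 e2 e3 ..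
qed

lemma fI_proj: "fI (x, P) = fI (projI m K x, P)"
  unfolding fI_def by (intro sum.cong refl) (simp add: action_proj)

lemma lbI_proj: "lbI (x, P) = lbI (projI m K x, P)"
  unfolding lbI_def fst_conv snd_conv
proof (intro sum.cong refl)
  fix i t assume i: "i \<in> {1..K}"
  have "gv m k (\<lambda>j. s_hat r (projI m K x) i j + P t j) = gv m k (\<lambda>j. s_hat r x i j + P t j)"
    by (rule gv_cong) (simp add: s_hat_proj'[OF i])
  then show "dotp m (gv m k (\<lambda>j. s_hat r x i j + P t j)) (r t) = dotp m (gv m k (\<lambda>j. s_hat r (projI m K x) i j + P t j)) (r t)"
    by simp
qed

lemma fI_meas: "(\<lambda>P. fI (h, P)) \<in> borel_measurable (OP m T a)"
  unfolding fI_def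
proof (rule borel_measurable_sum)
  fix t assume t: "t \<in> {1..T}"
  show "(\<lambda>P. prec_at m k (rtop1f_action m T K top1 r (h, P) t) (r t)) \<in> borel_measurable (OP m T a)"
  proof (cases "\<exists>j\<in>{1..m}. h (block_of T K t) j = t")
    case True
    then show ?thesis unfolding action_form by simp
  next
    case False
    then have "(\<lambda>P. prec_at m k (rtop1f_action m T K top1 r (h, P) t) (r t))
        = (\<lambda>P. (\<lambda>\<sigma>. prec_at m k \<sigma> (r t)) (amin m (\<lambda>j. s_hat r h (block_of T K t) j + P t j)))"
      unfolding action_form by simp
    also have "\<dots> \<in> borel_measurable (OP m T a)" by (rule meas_amin_OP[OF t])
    finally show ?thesis .
  qed
qed

lemma lbI_meas: "(\<lambda>P. lbI (h, P)) \<in> borel_measurable (OP m T a)"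
  unfolding lbI_def fst_conv snd_conv
proof (intro borel_measurable_sum)
  fix i t assume i: "i \<in> {1..K}" and t: "t \<in> block T K i"
  have tT: "t \<in> {1..T}" using block_sub[OF i] t by auto
  have "(\<lambda>P. dotp m (gv m k (\<lambda>j. s_hat r h i j + P t j)) (r t))
      = (\<lambda>P. (\<lambda>\<sigma>. dotp m (topv k \<sigma>) (r t)) (amin m (\<lambda>j. s_hat r h i j + P t j)))"
    unfolding gv_def ..
  also have "\<dots> \<in> borel_measurable (OP m T a)" by (rule meas_amin_OP[OF tT])
  finally show "(\<lambda>P. dotp m (gv m k (\<lambda>j. s_hat r h i j + P t j)) (r t)) \<in> borel_measurable (OP m T a)" .
qed

lemma fI_bnd: "\<bar>fI z\<bar> \<le> real T * real m"
proof -
  have "0 \<le> fI z" unfolding fI_def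
    by (intro sum_nonneg prec_nonneg) (use r_bnd in auto)
  moreover have "fI z \<le> (\<Sum>t\<in>{1..T}. real m)" unfolding fI_def
    by (intro sum_mono prec_le) (use r_bnd in auto)
  ultimately show ?thesis by simp
qed

lemma lbI_bnd: "\<bar>lbI z\<bar> \<le> real T * real k"
proof -
  have "0 \<le> lbI z" unfolding lbI_def
    by (intro sum_nonneg gv_bound(1)) (use r_bnd block_sub in blast)
  moreover have "lbI z \<le> (\<Sum>i\<in>{1..K}. \<Sum>t\<in>block T K i. real k)" unfolding lbI_def
    by (intro sum_mono gv_bound(2)) (use r_bnd block_sub in blast)
  moreover have "(\<Sum>i\<in>{1..K}. \<Sum>t\<in>block T K i. real k) = real T * real k"
    using sum_blocks[of "\<lambda>_. real k"] by simp
  ultimately show ?thesis by simp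
qed

end


context rsetup begin

definition Ev :: "(nat \<Rightarrow> real) \<Rightarrow> nat \<Rightarrow> real" where
  "Ev s j = (\<integral>p. gv m k (\<lambda>j'. s j' + p j') j \<partial>Qm m a)"

definition R :: "nat \<Rightarrow> nat \<Rightarrow> real" where
  "R i j = (\<Sum>t\<in>block T K i. r t j)"

lemma gv_01: "0 \<le> gv m k c j \<and> gv m k c j \<le> 1"
  unfolding gv_def topv_def by simp

lemma meas_gv: "(\<lambda>p. gv m k (\<lambda>j'. s j' + p j') j) \<in> borel_measurable (Qm m a)"
  unfolding gv_def using meas_amin_Q[of "\<lambda>\<sigma>. topv k \<sigma> j" m s a] by simp

lemma int_gv: "integrable (Qm m a) (\<lambda>p. gv m k (\<lambda>j'. s j' + p j') j)"
proof -
  interpret Q: prob_space "Qm m a" by (rule prob_Qm[OF a])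
  show ?thesis by (rule Q.integrable_const_bound[where B=1]) (use gv_01 meas_gv in auto)
qed

lemma meas_dotp_gv: "(\<lambda>p. dotp m (gv m k (\<lambda>j. s j + p j)) u) \<in> borel_measurable (Qm m a)"
  unfolding dotp_def by (intro borel_measurable_sum borel_measurable_times meas_gv) simp

lemma int_dotp: "(\<integral>p. dotp m (gv m k (\<lambda>j. s j + p j)) u \<partial>Qm m a) = (\<Sum>j\<in>{1..m}. Ev s j * u j)"
proof -
  have "(\<integral>p. dotp m (gv m k (\<lambda>j. s j + p j)) u \<partial>Qm m a)
      = (\<Sum>j\<in>{1..m}. (\<integral>p. gv m k (\<lambda>j'. s j' + p j') j * u j \<partial>Qm m a))"
    unfolding dotp_def by (rule Bochner_Integration.integral_sum) (intro integrable_mult_left int_gv)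
  also have "\<dots> = (\<Sum>j\<in>{1..m}. Ev s j * u j)" unfolding Ev_def by simp
  finally show ?thesis .
qed

lemma int_lbI_x: "(\<integral>P. lbI (x, P) \<partial>OP m T a) = (\<Sum>i\<in>{1..K}. \<Sum>j\<in>{1..m}. Ev (\<lambda>j. s_hat r x i j) j * R i j)"
proof -
  interpret OPp: prob_space "OP m T a" by (rule prob_OP[OF a])
  have it: "integrable (OP m T a) (\<lambda>P. dotp m (gv m k (\<lambda>j. s_hat r x i j + P t j)) (r t))"
    if i: "i \<in> {1..K}" and t: "t \<in> block T K i" for i t
  proof -
    have tT: "t \<in> {1..T}" using block_sub[OF i] t by auto
    have "(\<lambda>P. dotp m (gv m k (\<lambda>j. s_hat r x i j + P t j)) (r t)) \<in> borel_measurable (OP m T a)"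
      by (rule meas_OP_comp[OF tT meas_dotp_gv])
    moreover have "\<bar>dotp m (gv m k (\<lambda>j. s_hat r x i j + P t j)) (r t)\<bar> \<le> real k" for P
    proof -
      have "0 \<le> dotp m (gv m k (\<lambda>j. s_hat r x i j + P t j)) (r t)"
        by (rule gv_bound(1)) (use r_bnd[OF tT] in auto)
      moreover have "dotp m (gv m k (\<lambda>j. s_hat r x i j + P t j)) (r t) \<le> real k"
        by (rule gv_bound(2)) (use r_bnd[OF tT] in auto)
      ultimately show ?thesis by simp
    qed
    ultimately show ?thesis by (intro OPp.integrable_const_bound[where B="real k"]) auto
  qed
  have "(\<integral>P. lbI (x, P) \<partial>OP m T a)
      = (\<Sum>i\<in>{1..K}. \<integral>P. (\<Sum>t\<in>block T K i. dotp m (gv m k (\<lambda>j. s_hat r x i j + P t j)) (r t)) \<partial>OP m T a)"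
    unfolding lbI_def fst_conv snd_conv
    by (rule Bochner_Integration.integral_sum) (intro Bochner_Integration.integrable_sum it)
  also have "\<dots> = (\<Sum>i\<in>{1..K}. \<Sum>t\<in>block T K i. \<integral>P. dotp m (gv m k (\<lambda>j. s_hat r x i j + P t j)) (r t) \<partial>OP m T a)"
    by (intro sum.cong refl Bochner_Integration.integral_sum it) auto
  also have "\<dots> = (\<Sum>i\<in>{1..K}. \<Sum>t\<in>block T K i. \<Sum>j\<in>{1..m}. Ev (\<lambda>j. s_hat r x i j) j * r t j)"
  proof (intro sum.cong refl)
    fix i t assume i: "i \<in> {1..K}" and t: "t \<in> block T K i"
    have tT: "t \<in> {1..T}" using block_sub[OF i] t by auto
    have "(\<integral>P. dotp m (gv m k (\<lambda>j. s_hat r x i j + P t j)) (r t) \<partial>OP m T a)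
        = (\<integral>p. dotp m (gv m k (\<lambda>j. s_hat r x i j + p j)) (r t) \<partial>Qm m a)"
      by (rule integral_OP_comp[OF a tT meas_dotp_gv])
    also have "\<dots> = (\<Sum>j\<in>{1..m}. Ev (\<lambda>j. s_hat r x i j) j * r t j)" by (rule int_dotp)
    finally show "(\<integral>P. dotp m (gv m k (\<lambda>j. s_hat r x i j + P t j)) (r t) \<partial>OP m T a)
        = (\<Sum>j\<in>{1..m}. Ev (\<lambda>j. s_hat r x i j) j * r t j)" .
  qed
  also have "\<dots> = (\<Sum>i\<in>{1..K}. \<Sum>j\<in>{1..m}. Ev (\<lambda>j. s_hat r x i j) j * R i j)"
  proof (rule sum.cong[OF refl])
    fix i
    show "(\<Sum>t\<in>block T K i. \<Sum>j\<in>{1..m}. Ev (\<lambda>j. s_hat r x i j) j * r t j)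
        = (\<Sum>j\<in>{1..m}. Ev (\<lambda>j. s_hat r x i j) j * R i j)"
      unfolding R_def sum_distrib_left by (rule sum.swap)
  qed
  finally show ?thesis .
qed

lemma stepB:
  "(\<integral>\<omega>. fI \<omega> \<partial>(OI m T K \<Otimes>\<^sub>M OP m T a))
    \<ge> (\<Sum>x\<in>SI m T K. \<Sum>i\<in>{1..K}. \<Sum>j\<in>{1..m}. Ev (\<lambda>j. s_hat r x i j) j * R i j) / real (card (SI m T K))
      - real K * real m * real k"
proof -
  interpret P: pair_prob_space "OI m T K" "OP m T a"
    unfolding pair_prob_space_def pair_sigma_finite_def
    using prob_OI prob_OP[OF a] by (simp add: prob_space_imp_sigma_finite)
  have fi: "integrable (OI m T K \<Otimes>\<^sub>M OP m T a) fI"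
    by (rule pair_integral(1)[OF a probe_ne' _ fI_meas fI_bnd]) (use fI_proj in auto)
  have li: "integrable (OI m T K \<Otimes>\<^sub>M OP m T a) lbI"
    by (rule pair_integral(1)[OF a probe_ne' _ lbI_meas lbI_bnd]) (use lbI_proj in auto)
  have lv: "integral\<^sup>L (OI m T K \<Otimes>\<^sub>M OP m T a) lbI
      = (\<Sum>x\<in>SI m T K. integral\<^sup>L (OP m T a) (\<lambda>P. lbI (x, P))) / real (card (SI m T K))"
    by (rule pair_integral(2)[OF a probe_ne' _ lbI_meas lbI_bnd]) (use lbI_proj in auto)
  have "(\<integral>\<omega>. lbI \<omega> - real K * real m * real k \<partial>(OI m T K \<Otimes>\<^sub>M OP m T a))
      \<le> (\<integral>\<omega>. fI \<omega> \<partial>(OI m T K \<Otimes>\<^sub>M OP m T a))"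
    by (rule integral_mono[OF _ fi]) (use li stepA in auto)
  moreover have "(\<integral>\<omega>. lbI \<omega> - real K * real m * real k \<partial>(OI m T K \<Otimes>\<^sub>M OP m T a))
      = integral\<^sup>L (OI m T K \<Otimes>\<^sub>M OP m T a) lbI - real K * real m * real k"
    using li by (simp add: Bochner_Integration.integral_diff P.prob_space)
  ultimately show ?thesis unfolding lv by (simp add: int_lbI_x)
qed

end


context rsetup begin

lemma s_hat_Suc: "i \<ge> 1 \<Longrightarrow> s_hat r x (Suc i) j = s_hat r x i j + r (x i j) j"
  unfolding s_hat_def by (simp add: sum.atLeastLessThan_Suc)

lemma s_hat_1: "s_hat r x 1 j = 0"
  unfolding s_hat_def by simp

lemma s_hat_upd: "s_hat r (x(i := y)) i j = s_hat r x i j"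
  unfolding s_hat_def by (intro sum.cong refl) auto

lemma SI_mem: "x \<in> SI m T K \<Longrightarrow> i \<in> {1..K} \<Longrightarrow> j \<in> {1..m} \<Longrightarrow> x i j \<in> block T K i"
  unfolding SI_def probe_choices_def by (auto simp: PiE_iff)

lemma rh_bnd: "x \<in> SI m T K \<Longrightarrow> i \<in> {1..K} \<Longrightarrow> j \<in> {1..m} \<Longrightarrow> r (x i j) j \<in> {0, 1}"
  using SI_mem block_sub r01 by blast

lemma card_probe_pos: "i \<in> {1..K} \<Longrightarrow> card (probe_choices m T K i) > 0"
  using probe_ne' finite_probe by (simp add: card_gt_0_iff)

lemma stepC:
  fixes F :: "(nat \<Rightarrow> nat \<Rightarrow> nat) \<Rightarrow> real"
  assumes i: "i \<in> {1..K}" and j: "j \<in> {1..m}"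
    and inv: "\<And>x y. x \<in> SI m T K \<Longrightarrow> y \<in> probe_choices m T K i \<Longrightarrow> F (x(i := y)) = F x"
  shows "real L * (\<Sum>x\<in>SI m T K. F x * r (x i j) j) = (\<Sum>x\<in>SI m T K. F x) * R i j"
proof -
  define c where "c = real (card (probe_choices m T K i))"
  have c: "c > 0" unfolding c_def using card_probe_pos[OF i] by simp
  have A: "(\<Sum>x\<in>SI m T K. F x * r (x i j) j) * c = (\<Sum>x\<in>SI m T K. F x) * (\<Sum>y\<in>probe_choices m T K i. r (y j) j)"
    unfolding c_def SI_def
    by (rule sum_PiE_coord[where g="\<lambda>y. r (y j) j"]) (use i finite_probe inv in \<open>auto simp: SI_def\<close>)
  have B: "real (card (block T K i)) * (\<Sum>y\<in>probe_choices m T K i. r (y j) j) = c * R i j"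
    unfolding c_def R_def probe_choices_def
    by (rule probe_sum[where g="\<lambda>t. r t j"]) (use j in \<open>auto simp: block_def\<close>)
  have cb: "card (block T K i) = L" using block_card[of i T K] i L_def by simp
  have "real L * (\<Sum>x\<in>SI m T K. F x * r (x i j) j) * c = real L * ((\<Sum>x\<in>SI m T K. F x * r (x i j) j) * c)"
    by (simp add: mult_ac)
  also have "\<dots> = real L * ((\<Sum>x\<in>SI m T K. F x) * (\<Sum>y\<in>probe_choices m T K i. r (y j) j))" by (simp only: A)
  also have "\<dots> = (\<Sum>x\<in>SI m T K. F x) * (real (card (block T K i)) * (\<Sum>y\<in>probe_choices m T K i. r (y j) j))"
    by (simp add: cb mult_ac)
  also have "\<dots> = (\<Sum>x\<in>SI m T K. F x) * (c * R i j)" by (simp only: B)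
  also have "\<dots> = (\<Sum>x\<in>SI m T K. F x) * R i j * c" by (simp add: mult_ac)
  finally have "real L * (\<Sum>x\<in>SI m T K. F x * r (x i j) j) * c = (\<Sum>x\<in>SI m T K. F x) * R i j * c" .
  then show ?thesis using c by simp
qed

lemma stepC_Ev:
  assumes i: "i \<in> {1..K}" and j: "j \<in> {1..m}"
  shows "real L * (\<Sum>x\<in>SI m T K. Ev (\<lambda>j. s_hat r x i j) j * r (x i j) j)
       = (\<Sum>x\<in>SI m T K. Ev (\<lambda>j. s_hat r x i j) j) * R i j"
  by (rule stepC[OF i j]) (simp add: s_hat_upd)

lemma stepC_1:
  assumes i: "i \<in> {1..K}" and j: "j \<in> {1..m}"
  shows "real L * (\<Sum>x\<in>SI m T K. r (x i j) j) = real (card (SI m T K)) * R i j"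
  using stepC[OF i j, of "\<lambda>_. 1"] by simp

end


context rsetup begin

lemma stepD1:
  assumes x: "x \<in> SI m T K" and i: "i \<in> {1..K}"
  shows "(\<Sum>j\<in>{1..m}. Ev (\<lambda>j. s_hat r x (Suc i) j) j * r (x i j) j)
      \<le> (\<Sum>j\<in>{1..m}. Ev (\<lambda>j. s_hat r x i j) j * r (x i j) j) + real m * real k / a"
proof -
  define v where "v = (\<lambda>j. r (x i j) j)"
  define J where "J = {j\<in>{1..m}. v j = 1}"
  define h where "h = (\<lambda>p. dotp m (gv m k (\<lambda>j. s_hat r x i j + p j)) v)"
  have v01: "j \<in> {1..m} \<Longrightarrow> v j \<in> {0, 1}" for j unfolding v_def using rh_bnd[OF x i] by simp
  have vb: "j \<in> {1..m} \<Longrightarrow> 0 \<le> v j \<and> v j \<le> 1" for j using v01[of j] by auto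
  have hm: "h \<in> borel_measurable (Qm m a)" unfolding h_def by (rule meas_dotp_gv)
  have hb: "0 \<le> h p \<and> h p \<le> real k" for p
    unfolding h_def using gv_bound[where u=v and m=m and k=k] vb by blast
  have J: "J \<subseteq> {1..m}" unfolding J_def by auto
  have st: "(\<integral>p. h (shJ J p) \<partial>Qm m a) \<le> (\<integral>p. h p \<partial>Qm m a) + real (card J) * real k / a"
    by (rule stability[OF a J hm hb])
  have eq1: "(\<integral>p. h p \<partial>Qm m a) = (\<Sum>j\<in>{1..m}. Ev (\<lambda>j. s_hat r x i j) j * v j)"
    unfolding h_def by (rule int_dotp)
  have eq2: "h (shJ J p) = dotp m (gv m k (\<lambda>j. s_hat r x (Suc i) j + p j)) v" for p
  proof -
    have "gv m k (\<lambda>j. s_hat r x i j + shJ J p j) = gv m k (\<lambda>j. s_hat r x (Suc i) j + p j)"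
    proof (rule gv_cong)
      fix j assume j: "j \<in> {1..m}"
      have si: "s_hat r x (Suc i) j = s_hat r x i j + v j" unfolding v_def using i by (simp add: s_hat_Suc)
      show "s_hat r x i j + shJ J p j = s_hat r x (Suc i) j + p j"
        using v01[OF j] j unfolding si shJ_def J_def by auto
    qed
    then show ?thesis unfolding h_def by simp
  qed
  have eq3: "(\<integral>p. h (shJ J p) \<partial>Qm m a) = (\<Sum>j\<in>{1..m}. Ev (\<lambda>j. s_hat r x (Suc i) j) j * v j)"
    unfolding eq2 by (rule int_dotp)
  have cJ: "real (card J) * real k / a \<le> real m * real k / a"
  proof -
    have "card J \<le> m" using card_mono[OF _ J] by simp
    then have "real (card J) * real k \<le> real m * real k" by (intro mult_right_mono) auto
    then show ?thesis using a by (simp add: divide_right_mono)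
  qed
  show ?thesis using st cJ unfolding eq1 eq3 v_def by linarith
qed

lemma integrable_dotp_gv: "integrable (Qm m a) (\<lambda>p. dotp m (gv m k (\<lambda>j. s j + p j)) u)"
proof -
  have "integrable (Qm m a) (\<lambda>p. \<Sum>j\<in>{1..m}. gv m k (\<lambda>j'. s j' + p j') j * u j)"
    by (intro Bochner_Integration.integrable_sum integrable_mult_left int_gv)
  then show ?thesis unfolding dotp_def .
qed

lemma stepD2:
  assumes x: "x \<in> SI m T K" and \<sigma>: "\<sigma> \<in> perms m"
  shows "dotp m (topv k \<sigma>) (\<lambda>j. s_hat r x (Suc K) j) - real k * a
      \<le> (\<Sum>i\<in>{1..K}. \<Sum>j\<in>{1..m}. Ev (\<lambda>j. s_hat r x (Suc i) j) j * r (x i j) j)"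
proof -
  interpret Q: prob_space "Qm m a" by (rule prob_Qm[OF a])
  define c where "c = dotp m (topv k \<sigma>) (\<lambda>j. s_hat r x (Suc K) j) - real k * a"
  define G where "G = (\<lambda>p. \<Sum>i\<in>{1..K}. dotp m (gv m k (\<lambda>j. s_hat r x (Suc i) j + p j)) (\<lambda>j. r (x i j) j))"
  have Gi: "integrable (Qm m a) G" unfolding G_def
    by (intro Bochner_Integration.integrable_sum integrable_dotp_gv)
  have eqG: "(\<integral>p. G p \<partial>Qm m a) = (\<Sum>i\<in>{1..K}. \<Sum>j\<in>{1..m}. Ev (\<lambda>j. s_hat r x (Suc i) j) j * r (x i j) j)"
    unfolding G_def
    by (subst Bochner_Integration.integral_sum) (auto intro: integrable_dotp_gv simp: int_dotp)
  have AEc: "AE p in Qm m a. c \<le> G p"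
    using AE_Qm_bounds[OF a, of m]
  proof eventually_elim
    case (elim p)
    define X where "X = (\<lambda>n j. s_hat r x (Suc n) j + p j)"
    define y where "y = (\<lambda>n j. r (x n j) j)"
    have step: "X (Suc n) j = X n j + y (Suc n) j" for n j
      unfolding X_def y_def by (simp add: s_hat_Suc)
    have btl': "dotp m (gv m k (X K)) (X K) - dotp m (gv m k (X 0)) (X 0)
        \<le> (\<Sum>i\<in>{1..K}. dotp m (gv m k (X i)) (y i))"
      by (rule btl[where x=X and y=y]) (rule step)
    have "dotp m (topv k \<sigma>) (X K) \<le> dotp m (gv m k (X K)) (X K)" by (rule gv_opt[OF \<sigma>])
    moreover have "dotp m (topv k \<sigma>) (X K) = dotp m (topv k \<sigma>) (\<lambda>j. s_hat r x (Suc K) j) + dotp m (topv k \<sigma>) p"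
      unfolding X_def by (rule dotp_add)
    moreover have "0 \<le> dotp m (topv k \<sigma>) p"
      by (rule dotp_topv_bound(1)[OF \<sigma>, where B=a]) (use elim a in auto)
    moreover have "dotp m (gv m k (X 0)) (X 0) \<le> real k * a"
    proof -
      have x0: "X 0 j = p j" for j unfolding X_def using s_hat_1[of x j] by simp
      show ?thesis unfolding gv_def
        by (rule dotp_topv_bound(2)[OF amin_in]) (use elim a x0 in auto)
    qed
    moreover have "(\<Sum>i\<in>{1..K}. dotp m (gv m k (X i)) (y i)) = G p"
      unfolding G_def X_def y_def ..
    ultimately show ?case using btl' unfolding c_def by linarith
  qed
  have "(\<integral>p. c \<partial>Qm m a) \<le> (\<integral>p. G p \<partial>Qm m a)"
    by (rule integral_mono_AE[OF _ Gi AEc]) simp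
  then show ?thesis unfolding eqG c_def[symmetric] by (simp add: Q.prob_space)
qed

lemma stepD:
  assumes x: "x \<in> SI m T K" and \<sigma>: "\<sigma> \<in> perms m"
  shows "dotp m (topv k \<sigma>) (\<lambda>j. s_hat r x (Suc K) j) - real k * a - real K * (real m * real k / a)
      \<le> (\<Sum>i\<in>{1..K}. \<Sum>j\<in>{1..m}. Ev (\<lambda>j. s_hat r x i j) j * r (x i j) j)"
proof -
  have "(\<Sum>i\<in>{1..K}. \<Sum>j\<in>{1..m}. Ev (\<lambda>j. s_hat r x (Suc i) j) j * r (x i j) j)
      \<le> (\<Sum>i\<in>{1..K}. (\<Sum>j\<in>{1..m}. Ev (\<lambda>j. s_hat r x i j) j * r (x i j) j) + real m * real k / a)"
    by (rule sum_mono) (rule stepD1[OF x])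
  also have "\<dots> = (\<Sum>i\<in>{1..K}. \<Sum>j\<in>{1..m}. Ev (\<lambda>j. s_hat r x i j) j * r (x i j) j) + real K * (real m * real k / a)"
    by (simp add: sum.distrib)
  finally show ?thesis using stepD2[OF x \<sigma>] by linarith
qed

end


context rsetup begin

lemma main_bound:
  assumes \<sigma>: "\<sigma> \<in> perms m"
  shows "(\<integral>\<omega>. fI \<omega> \<partial>(OI m T K \<Otimes>\<^sub>M OP m T a))
     \<ge> (\<Sum>t\<in>{1..T}. prec_at m k \<sigma> (r t)) - real L * real k * a - real L * (real K * (real m * real k / a))
       - real K * real m * real k"
proof -
  define S where "S = SI m T K"
  define n where "n = real (card S)"
  have n: "n > 0" unfolding n_def S_def using finite_SI SI_ne[OF probe_ne'] by (simp add: card_gt_0_iff)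
  define E where "E = (\<lambda>x i j. Ev (\<lambda>j. s_hat r x i j) j)"
  define D where "D = (\<lambda>x. dotp m (topv k \<sigma>) (\<lambda>j. s_hat r x (Suc K) j))"
  define c where "c = real k * a + real K * (real m * real k / a)"
  have e2: "(\<Sum>x\<in>S. \<Sum>i\<in>{1..K}. \<Sum>j\<in>{1..m}. E x i j * R i j)
      = real L * (\<Sum>x\<in>S. \<Sum>i\<in>{1..K}. \<Sum>j\<in>{1..m}. E x i j * r (x i j) j)"
  proof -
    have "(\<Sum>x\<in>S. \<Sum>i\<in>{1..K}. \<Sum>j\<in>{1..m}. E x i j * R i j) = (\<Sum>i\<in>{1..K}. \<Sum>j\<in>{1..m}. \<Sum>x\<in>S. E x i j * R i j)"
      by (simp add: sum.swap[of _ S])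
    also have "\<dots> = (\<Sum>i\<in>{1..K}. \<Sum>j\<in>{1..m}. real L * (\<Sum>x\<in>S. E x i j * r (x i j) j))"
    proof (intro sum.cong refl)
      fix i j assume i: "i \<in> {1..K}" and j: "j \<in> {1..m}"
      show "(\<Sum>x\<in>S. E x i j * R i j) = real L * (\<Sum>x\<in>S. E x i j * r (x i j) j)"
        using stepC_Ev[OF i j] unfolding E_def S_def by (simp add: sum_distrib_right)
    qed
    also have "\<dots> = real L * (\<Sum>x\<in>S. \<Sum>i\<in>{1..K}. \<Sum>j\<in>{1..m}. E x i j * r (x i j) j)"
      by (simp add: sum_distrib_left sum.swap[of _ S])
    finally show ?thesis .
  qed
  have e3: "real L * (\<Sum>x\<in>S. \<Sum>i\<in>{1..K}. \<Sum>j\<in>{1..m}. E x i j * r (x i j) j)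
      \<ge> real L * (\<Sum>x\<in>S. D x) - real L * n * c"
  proof -
    have "(\<Sum>x\<in>S. D x - c) \<le> (\<Sum>x\<in>S. \<Sum>i\<in>{1..K}. \<Sum>j\<in>{1..m}. E x i j * r (x i j) j)"
      by (rule sum_mono) (use stepD[OF _ \<sigma>] in \<open>auto simp: D_def E_def c_def S_def diff_diff_eq\<close>)
    moreover have "(\<Sum>x\<in>S. D x - c) = (\<Sum>x\<in>S. D x) - n * c"
      unfolding n_def by (simp add: sum_subtractf)
    ultimately have "(\<Sum>x\<in>S. D x) - n * c \<le> (\<Sum>x\<in>S. \<Sum>i\<in>{1..K}. \<Sum>j\<in>{1..m}. E x i j * r (x i j) j)" by simp
    then have "real L * ((\<Sum>x\<in>S. D x) - n * c) \<le> real L * (\<Sum>x\<in>S. \<Sum>i\<in>{1..K}. \<Sum>j\<in>{1..m}. E x i j * r (x i j) j)"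
      by (rule mult_left_mono) simp
    then show ?thesis by (simp add: right_diff_distrib mult.assoc)
  qed
  have e4: "real L * (\<Sum>x\<in>S. D x) = n * (\<Sum>t\<in>{1..T}. prec_at m k \<sigma> (r t))"
  proof -
    have Dx: "D x = (\<Sum>j\<in>{1..m}. topv k \<sigma> j * (\<Sum>i\<in>{1..K}. r (x i j) j))" for x
    proof -
      have "{1..<Suc K} = {1..K}" by auto
      then show ?thesis unfolding D_def dotp_def s_hat_def by simp
    qed
    have "real L * (\<Sum>x\<in>S. D x) = (\<Sum>j\<in>{1..m}. topv k \<sigma> j * (\<Sum>i\<in>{1..K}. real L * (\<Sum>x\<in>S. r (x i j) j)))"
      unfolding Dx by (simp add: sum_distrib_left sum.swap[of _ S] mult_ac)
    also have "\<dots> = (\<Sum>j\<in>{1..m}. topv k \<sigma> j * (\<Sum>i\<in>{1..K}. n * R i j))"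
    proof (rule sum.cong[OF refl])
      fix j assume j: "j \<in> {1..m}"
      have "(\<Sum>i\<in>{1..K}. real L * (\<Sum>x\<in>S. r (x i j) j)) = (\<Sum>i\<in>{1..K}. n * R i j)"
      proof (rule sum.cong[OF refl])
        fix i assume i: "i \<in> {1..K}"
        show "real L * (\<Sum>x\<in>S. r (x i j) j) = n * R i j"
          unfolding n_def S_def by (rule stepC_1[OF i j])
      qed
      then show "topv k \<sigma> j * (\<Sum>i\<in>{1..K}. real L * (\<Sum>x\<in>S. r (x i j) j)) = topv k \<sigma> j * (\<Sum>i\<in>{1..K}. n * R i j)"
        by simp
    qed
    also have "\<dots> = (\<Sum>j\<in>{1..m}. topv k \<sigma> j * (n * (\<Sum>i\<in>{1..K}. R i j)))"
      by (simp add: sum_distrib_left)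
    also have "\<dots> = (\<Sum>j\<in>{1..m}. n * (topv k \<sigma> j * (\<Sum>t\<in>{1..T}. r t j)))"
    proof (rule sum.cong[OF refl])
      fix j
      have Rs: "(\<Sum>i\<in>{1..K}. R i j) = (\<Sum>t\<in>{1..T}. r t j)" unfolding R_def by (rule sum_blocks[symmetric])
      show "topv k \<sigma> j * (n * (\<Sum>i\<in>{1..K}. R i j)) = n * (topv k \<sigma> j * (\<Sum>t\<in>{1..T}. r t j))"
        unfolding Rs by simp
    qed
    also have "\<dots> = n * (\<Sum>j\<in>{1..m}. topv k \<sigma> j * (\<Sum>t\<in>{1..T}. r t j))"
      by (simp add: sum_distrib_left)
    also have "(\<Sum>j\<in>{1..m}. topv k \<sigma> j * (\<Sum>t\<in>{1..T}. r t j)) = (\<Sum>t\<in>{1..T}. prec_at m k \<sigma> (r t))"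
      unfolding prec_at_dotp dotp_def sum_distrib_left by (rule sum.swap)
    finally show ?thesis .
  qed
  have "(\<integral>\<omega>. fI \<omega> \<partial>(OI m T K \<Otimes>\<^sub>M OP m T a))
      \<ge> (\<Sum>x\<in>S. \<Sum>i\<in>{1..K}. \<Sum>j\<in>{1..m}. E x i j * R i j) / n - real K * real m * real k"
    using stepB unfolding S_def n_def E_def .
  moreover have "(\<Sum>x\<in>S. \<Sum>i\<in>{1..K}. \<Sum>j\<in>{1..m}. E x i j * R i j) / n
      \<ge> (n * (\<Sum>t\<in>{1..T}. prec_at m k \<sigma> (r t)) - real L * n * c) / n"
    using e2 e3 e4 n by (intro divide_right_mono) auto
  moreover have "(n * (\<Sum>t\<in>{1..T}. prec_at m k \<sigma> (r t)) - real L * n * c) / n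
      = (\<Sum>t\<in>{1..T}. prec_at m k \<sigma> (r t)) - real L * c"
    using n by (simp add: field_simps)
  ultimately show ?thesis unfolding c_def by (simp add: algebra_simps)
qed

end


lemma arith_final:
  fixes m T K L :: nat
  assumes m: "m \<ge> 1" and T: "T \<ge> 1" and K: "real K = real m powr (-1/3) * real T powr (2/3)"
    and TKL: "T = K * L"
  shows "real L * sqrt (real m * real K) = real m powr (2/3) * real T powr (2/3)"
    and "real K * real m = real m powr (2/3) * real T powr (2/3)"
proof -
  define u where "u = real m powr (1/3)"
  define v where "v = real T powr (1/3)"
  have m0: "real m > 0" and T0: "real T > 0" using m T by auto
  have u0: "u > 0" and v0: "v > 0" unfolding u_def v_def using m0 T0 by auto
  have pw: "x powr (real n * (1/3)) = (x powr (1/3)) ^ n" if "x > 0" for x :: real and n :: nat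
    using powr_power[of x "1/3" n] that by simp
  have hm: "real m = u ^ 3" unfolding u_def using pw[OF m0, of 3] m0 by simp
  have hT: "real T = v ^ 3" unfolding v_def using pw[OF T0, of 3] T0 by simp
  have m23: "real m powr (2/3) = u ^ 2" unfolding u_def using pw[OF m0, of 2] by simp
  have T23: "real T powr (2/3) = v ^ 2" unfolding v_def using pw[OF T0, of 2] by simp
  have m13: "real m powr (-1/3) = 1 / u" unfolding u_def
    using powr_minus_divide[of "real m" "1/3"] by simp
  have hK: "real K = v ^ 2 / u" using K m13 T23 by simp
  have Kpos: "real K > 0" using hK u0 v0 by simp
  have hL: "real L = u * v"
  proof -
    have "real T = real K * real L" using TKL by simp
    then have "v ^ 3 = v ^ 2 / u * real L" using hT hK by simp
    then have "real L = v ^ 3 * u / v ^ 2" using u0 v0 by (simp add: field_simps)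
    also have "\<dots> = u * v" using v0 by (simp add: power_eq_if field_simps)
    finally show ?thesis .
  qed
  have mK: "real m * real K = (u * v) ^ 2" using hm hK u0 by (simp add: field_simps power_eq_if)
  have sq: "sqrt (real m * real K) = u * v" unfolding mK using u0 v0 by simp
  show "real L * sqrt (real m * real K) = real m powr (2/3) * real T powr (2/3)"
    unfolding sq hL m23 T23 by (simp add: power2_eq_square)
  show "real K * real m = real m powr (2/3) * real T powr (2/3)"
    unfolding m23 T23 unfolding hK hm using u0 by (simp add: field_simps power_eq_if)
qed

theorem theorem5:
  shows "\<exists>C>0. \<forall>(m::nat) (k::nat) (T::nat) (K::nat) (\<epsilon>::real) (r::nat \<Rightarrow> nat \<Rightarrow> real)
      (top1::nat \<Rightarrow> nat \<Rightarrow> nat \<Rightarrow> nat).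
    1 \<le> m \<and> 1 \<le> k \<and> 1 \<le> K \<and> K dvd T \<and> m \<le> T div K \<and>
    real K = real m powr (-1/3) * real T powr (2/3) \<and>
    \<epsilon> = sqrt (1 / (real m * real K)) \<and>
    (\<forall>t\<in>{1..T}. \<forall>j\<in>{1..m}. r t j \<in> {0, 1}) \<and>
    (\<forall>t\<in>{1..T}. \<forall>j\<in>{1..m}. top1 t j permutes {1..m} \<and> top1 t j j = 1)
    \<longrightarrow>
    (\<integral>\<omega>. (\<Sum>t\<in>{1..T}. prec_at m k (rtop1f_action m T K top1 r \<omega> t) (r t))
        \<partial>rtop1f_space m T K \<epsilon>)
      \<ge> Max {\<Sum>t\<in>{1..T}. prec_at m k \<sigma> (r t) | \<sigma>. \<sigma> permutes {1..m}}
         - C * real k * real m powr (2/3) * real T powr (2/3)"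
proof (rule exI[of _ 3], intro conjI allI impI)
  show "(0::real) < 3" by simp
next
  fix m k T K :: nat and \<epsilon> :: real and r :: "nat \<Rightarrow> nat \<Rightarrow> real" and top1 :: "nat \<Rightarrow> nat \<Rightarrow> nat \<Rightarrow> nat"
  assume H: "1 \<le> m \<and> 1 \<le> k \<and> 1 \<le> K \<and> K dvd T \<and> m \<le> T div K \<and>
    real K = real m powr (-1/3) * real T powr (2/3) \<and>
    \<epsilon> = sqrt (1 / (real m * real K)) \<and>
    (\<forall>t\<in>{1..T}. \<forall>j\<in>{1..m}. r t j \<in> {0, 1}) \<and>
    (\<forall>t\<in>{1..T}. \<forall>j\<in>{1..m}. top1 t j permutes {1..m} \<and> top1 t j j = 1)"
  then have m1: "1 \<le> m" and K1: "1 \<le> K" and dvd: "K dvd T" and mL: "m \<le> T div K"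
    and hK: "real K = real m powr (-1/3) * real T powr (2/3)"
    and he: "\<epsilon> = sqrt (1 / (real m * real K))"
    and r01: "\<forall>t\<in>{1..T}. \<forall>j\<in>{1..m}. r t j \<in> {0, 1}" by auto
  define L where "L = T div K"
  define a where "a = 1 / \<epsilon>"
  have mK0: "real m * real K > 0" using m1 K1 by simp
  have ha: "a = sqrt (real m * real K)" unfolding a_def he using mK0
    by (simp add: real_sqrt_divide)
  have a0: "a > 0" unfolding ha using mK0 by simp
  have TKL: "T = K * L" unfolding L_def using dvd by simp
  have T1: "T \<ge> 1" using m1 mL K1 TKL unfolding L_def[symmetric] by (cases L) auto
  interpret rsetup m k T K L a r top1
    by unfold_locales (use m1 K1 dvd mL a0 r01 L_def in auto)
  define X where "X = real m powr (2/3) * real T powr (2/3)"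
  have X1: "real L * a = X" unfolding X_def ha by (rule arith_final(1)[OF m1 T1 hK TKL])
  have X2: "real K * real m = X" unfolding X_def by (rule arith_final(2)[OF m1 T1 hK TKL])
  have X3: "real L * (real K * (real m * real k / a)) = real k * X"
  proof -
    have "real K * real m / a = a" unfolding ha using mK0
      by (simp add: field_simps real_sqrt_mult[symmetric]) (metis mult.commute real_div_sqrt less_eq_real_def)
    then have "real L * (real K * (real m * real k / a)) = real k * (real L * a)"
      by (metis (no_types, lifting) mult.commute mult.left_commute times_divide_eq_right)
    then show ?thesis using X1 by simp
  qed
  have sp: "rtop1f_space m T K \<epsilon> = OI m T K \<Otimes>\<^sub>M OP m T a" unfolding a_def by (rule space_eq)
  define F where "F = (\<lambda>\<sigma>. \<Sum>t\<in>{1..T}. prec_at m k \<sigma> (r t))"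
  have setF: "{\<Sum>t\<in>{1..T}. prec_at m k \<sigma> (r t) | \<sigma>. \<sigma> permutes {1..m}} = F ` perms m"
    unfolding F_def perms_def by auto
  have "Max (F ` perms m) \<in> F ` perms m" using finite_perms perms_ne by (intro Max_in) auto
  then obtain \<sigma> where \<sigma>: "\<sigma> \<in> perms m" and Mx: "Max (F ` perms m) = F \<sigma>" by auto
  have mb: "(\<integral>\<omega>. fI \<omega> \<partial>(OI m T K \<Otimes>\<^sub>M OP m T a))
     \<ge> F \<sigma> - real L * real k * a - real L * (real K * (real m * real k / a)) - real K * real m * real k"
    unfolding F_def by (rule main_bound[OF \<sigma>])
  have "F \<sigma> - real L * real k * a - real L * (real K * (real m * real k / a)) - real K * real m * real k
      = F \<sigma> - 3 * real k * X"
    using X1 X2 X3 by (simp add: algebra_simps)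
  then show "(\<integral>\<omega>. (\<Sum>t\<in>{1..T}. prec_at m k (rtop1f_action m T K top1 r \<omega> t) (r t))
        \<partial>rtop1f_space m T K \<epsilon>)
      \<ge> Max {\<Sum>t\<in>{1..T}. prec_at m k \<sigma> (r t) | \<sigma>. \<sigma> permutes {1..m}}
         - 3 * real k * real m powr (2/3) * real T powr (2/3)"
    using mb unfolding sp setF Mx X_def fI_def by (simp add: mult.assoc)
qed


end
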